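(* For every integer $n>24$, the generalized Petersen graph $GP(n,4)$ is not $\ell$-distance-balanced for any integer $\ell$ with $3\le \ell<{\rm diam}(GP(n,4))$.
   Context: For a connected graph $G$ and $x,y\in V(G)$, $d_G(x,y)$ denotes the distance and ${\rm diam}(G)$ the diameter. Let $W_{xy}=\{w\in V(G): d_G(w,x)<d_G(w,y)\}$. $G$ is called $\ell$-distance-balanced if $|W_{xy}|=|W_{yx}|$ for every pair $x,y\in V(G)$ with $d_G(x,y)=\ell$. For integers $n\ge 3$ and $1\le k<n/2$, the generalized Petersen graph $GP(n,k)$ has vertex set $\{u_i: i\in\mathbb{Z}_n\}\cup\{v_i: i\in\mathbb{Z}_n\}$ and edge set $\{u_iu_{i+1}: i\in\mathbb{Z}_n\}\cup\{v_iv_{i+k}: i\in\mathbb{Z}_n\}\cup\{u_iv_i: i\in\mathbb{Z}_n\}$. *)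

theory Defs
  imports Main
begin

fun walk_of_len :: "'a set \<Rightarrow> ('a \<Rightarrow> 'a \<Rightarrow> bool) \<Rightarrow> nat \<Rightarrow> 'a \<Rightarrow> 'a \<Rightarrow> bool" where
  "walk_of_len V E 0 x y = (x \<in> V \<and> x = y)"
| "walk_of_len V E (Suc m) x y = (x \<in> V \<and> (\<exists>z\<in>V. E x z \<and> walk_of_len V E m z y))"

text \<open>Graph distance (meaningful for connected graphs).\<close>
definition gdist :: "'a set \<Rightarrow> ('a \<Rightarrow> 'a \<Rightarrow> bool) \<Rightarrow> 'a \<Rightarrow> 'a \<Rightarrow> nat" where
  "gdist V E x y = (LEAST m. walk_of_len V E m x y)"

definition gdiam :: "'a set \<Rightarrow> ('a \<Rightarrow> 'a \<Rightarrow> bool) \<Rightarrow> nat" where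
  "gdiam V E = Max {gdist V E x y | x y. x \<in> V \<and> y \<in> V}"

definition Wset :: "'a set \<Rightarrow> ('a \<Rightarrow> 'a \<Rightarrow> bool) \<Rightarrow> 'a \<Rightarrow> 'a \<Rightarrow> 'a set" where
  "Wset V E x y = {w \<in> V. gdist V E w x < gdist V E w y}"

definition l_distance_balanced :: "'a set \<Rightarrow> ('a \<Rightarrow> 'a \<Rightarrow> bool) \<Rightarrow> nat \<Rightarrow> bool" where
  "l_distance_balanced V E l =
     (\<forall>x\<in>V. \<forall>y\<in>V. gdist V E x y = l \<longrightarrow> card (Wset V E x y) = card (Wset V E y x))"

text \<open>Generalized Petersen graph GP(n,k): vertex (False,i) is u_i, (True,i) is v_i, i < n.\<close>
definition gp_verts :: "nat \<Rightarrow> (bool \<times> nat) set" where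
  "gp_verts n = {(b, i). i < n}"

definition gp_adj :: "nat \<Rightarrow> nat \<Rightarrow> bool \<times> nat \<Rightarrow> bool \<times> nat \<Rightarrow> bool" where
  "gp_adj n k x y = (case (x, y) of
      ((False, i), (False, j)) \<Rightarrow> j = (i + 1) mod n \<or> i = (j + 1) mod n
    | ((True, i), (True, j)) \<Rightarrow> j = (i + k) mod n \<or> i = (j + k) mod n
    | ((False, i), (True, j)) \<Rightarrow> i = j
    | ((True, i), (False, j)) \<Rightarrow> i = j)"

end

theory Submission
  imports Defs
begin

definition mm :: "nat \<Rightarrow> nat" where "mm r = (if r = 0 then 0 else if r = 1 then 1 else 2)"
definition Guu :: "nat \<Rightarrow> nat" where "Guu k = (if k < 4 then k else k div 4 + 2 + mm (k mod 4))"
definition Guv :: "nat \<Rightarrow> nat" where "Guv k = k div 4 + 1 + mm (k mod 4)"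
definition Gvv :: "nat \<Rightarrow> nat" where "Gvv k = (if k mod 4 = 0 then k div 4 else k div 4 + 2 + mm (k mod 4))"

lemma split4: fixes k :: nat obtains q where "k = 4*q" | q where "k = 4*q+1" | q where "k = 4*q+2" | q where "k = 4*q+3"
proof -
  have e: "k = 4*(k div 4) + k mod 4" by simp
  have "k mod 4 < 4" by simp
  then have "k mod 4 = 0 \<or> k mod 4 = 1 \<or> k mod 4 = 2 \<or> k mod 4 = 3" by linarith
  then show ?thesis
  proof (elim disjE)
    assume "k mod 4 = 0" then show ?thesis using that(1)[of "k div 4"] e by simp
  next
    assume "k mod 4 = 1" then show ?thesis using that(2)[of "k div 4"] e by simp
  next
    assume "k mod 4 = 2" then show ?thesis using that(3)[of "k div 4"] e by simp
  next
    assume "k mod 4 = 3" then show ?thesis using that(4)[of "k div 4"] e by simp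
  qed
qed

lemma m4[simp]: "Suc (4*q) mod 4 = 1" "Suc(Suc(4*q)) mod 4 = 2" "Suc(Suc(Suc(4*q))) mod 4 = 3"
  "Suc (4*q) div 4 = q" "Suc(Suc(4*q)) div 4 = q" "Suc(Suc(Suc(4*q))) div 4 = q"
  "Suc (Suc (Suc (Suc (4*q)))) div 4 = Suc q" "Suc (Suc (Suc (Suc (4*q)))) mod 4 = 0"
  by (simp_all add: mod_Suc div_Suc)

lemma Guu_lip1: "Guu (Suc k) \<le> Guu k + 1" "Guu k \<le> Guu (Suc k) + 1"
  by (cases k rule: split4; simp add: Guu_def mm_def)+
lemma Guv_lip1: "Guv (Suc k) \<le> Guv k + 1" "Guv k \<le> Guv (Suc k) + 1"
  by (cases k rule: split4; simp add: Guv_def mm_def)+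
lemma Guv_4: "Guv (k+4) = Guv k + 1" by (cases k rule: split4; simp add: Guv_def mm_def)
lemma Gvv_4: "Gvv (k+4) = Gvv k + 1" by (cases k rule: split4; simp add: Gvv_def mm_def)
lemma spoke1: "Guu k \<le> Guv k + 1" "Guv k \<le> Guu k + 1" "Gvv k \<le> Guv k + 1" "Guv k \<le> Gvv k + 1"
  by (cases k rule: split4; simp add: Guu_def Guv_def Gvv_def mm_def)+

definition "Duu n i = min (Guu i) (Guu (n - i))"
definition "Duv n i = min (Guv i) (Guv (n - i))"
definition "Dvv n i = min (Gvv i) (Gvv (n - i))"

lemma D_rim_gen:
  fixes G :: "nat \<Rightarrow> nat"
  assumes a1: "\<And>k. G (Suc k) \<le> G k + 1" and a2: "\<And>k. G k \<le> G (Suc k) + 1" and "i < n"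
  shows "min (G ((i+1) mod n)) (G (n - (i+1) mod n)) \<le> min (G i) (G (n-i)) + 1 \<and>
    min (G i) (G (n-i)) \<le> min (G ((i+1) mod n)) (G (n - (i+1) mod n)) + 1"
proof (cases "i+1 < n")
  case True
  then have e: "(i+1) mod n = Suc i" "n - i = Suc (n - (i+1))" by auto
  show ?thesis unfolding e using a1[of i] a2[of i] a1[of "n - (i+1)"] a2[of "n-(i+1)"] by (auto simp: min_def)
next
  case False
  then have e: "(i+1) mod n = 0" "n - i = Suc 0" "n = Suc i" using \<open>i<n\<close> by (auto, metis Suc_lessI mod_self)
  show ?thesis unfolding e using a1[of 0] a2[of 0] a1[of i] a2[of i] by (auto simp: min_def)
qed

lemma Gl: "Guv k \<ge> k div 4" "Gvv k \<ge> k div 4" unfolding Guv_def Gvv_def by auto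

lemma small4: "j \<le> 4 \<Longrightarrow> Guv j \<le> Guv (4 - j) + 1 \<and> Gvv j \<le> Gvv (4 - j) + 1 \<and> Guv j \<le> 3 \<and> Gvv j \<le> 4"
proof -
  assume "j \<le> 4"
  then have "j = 0 \<or> j = 1 \<or> j = 2 \<or> j = 3 \<or> j = 4" by linarith
  then show ?thesis by (elim disjE) (simp_all add: Guv_def Gvv_def mm_def)
qed

lemma D_inner_gen:
  fixes G :: "nat \<Rightarrow> nat"
  assumes a1: "\<And>k. G (k+4) = G k + 1" and a2: "\<And>k. G k \<ge> k div 4"
    and a3: "\<And>j. j \<le> 4 \<Longrightarrow> G j \<le> G (4 - j) + 1 \<and> G j \<le> 4" and "i < n" "24 < n"
  shows "min (G ((i+4) mod n)) (G (n - (i+4) mod n)) \<le> min (G i) (G (n-i)) + 1 \<and>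
    min (G i) (G (n-i)) \<le> min (G ((i+4) mod n)) (G (n - (i+4) mod n)) + 1"
proof (cases "i + 4 < n")
  case True
  then have e: "(i+4) mod n = i+4" "n - i = (n - (i+4)) + 4" by auto
  have h: "G (i+4) = G i + 1" "G (n-i) = G (n - (i+4)) + 1" using a1[of i] a1[of "n - (i+4)"] e(2) by metis+
  show ?thesis unfolding e(1) h min_def by simp
next
  case False
  define j where "j = i + 4 - n"
  have j1: "j < 4" "n - i = 4 - j" using False \<open>i<n\<close> \<open>24 < n\<close> by (auto simp: j_def)
  have "(i+4) mod n = (i + 4 - n) mod n" using False by (simp add: le_mod_geq)
  also have "\<dots> = j" using j1 \<open>24 < n\<close> by (simp add: j_def)
  finally have j: "j < 4" "(i+4) mod n = j" "n - i = 4 - j" using j1 by auto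
  have "20 \<le> i" using False \<open>24 < n\<close> by linarith
  then have "5 \<le> i div 4" by presburger
  then have gi: "G i \<ge> 5" using a2[of i] by linarith
  have "20 \<le> n - j" using j \<open>24 < n\<close> by linarith
  then have "5 \<le> (n - j) div 4" by presburger
  then have gnj: "G (n - j) \<ge> 5" using a2[of "n-j"] by linarith
  have "4 - (4 - j) = j" using j by auto
  then have "G j \<le> G (4 - j) + 1" "G j \<le> 4" "G (4 - j) \<le> G j + 1" "G (4-j) \<le> 4"
    using a3[of j] a3[of "4-j"] j by auto
  then show ?thesis unfolding j(2) j(3) min_def using gi gnj by simp
qed

lemma walk_in: "walk_of_len V E m a b \<Longrightarrow> a \<in> V \<and> b \<in> V"
  by (induction m arbitrary: a) auto

lemma walk_trans: "walk_of_len V E m a b \<Longrightarrow> walk_of_len V E k b c \<Longrightarrow> walk_of_len V E (m+k) a c"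
  by (induction m arbitrary: a) auto

lemma gdist_le: "walk_of_len V E m a b \<Longrightarrow> gdist V E a b \<le> m"
  unfolding gdist_def by (rule Least_le)

lemma gdist_walk: "walk_of_len V E m a b \<Longrightarrow> walk_of_len V E (gdist V E a b) a b"
  unfolding gdist_def by (rule LeastI)

lemma potential_walk:
  assumes "\<And>z z'. z \<in> V \<Longrightarrow> z' \<in> V \<Longrightarrow> E z z' \<Longrightarrow> P z' \<le> P z + (1::nat)"
  shows "walk_of_len V E m a b \<Longrightarrow> P b \<le> P a + m"
proof (induction m arbitrary: a)
  case 0 then show ?case by simp
next
  case (Suc m)
  then obtain z where "a \<in> V" "z \<in> V" "E a z" "walk_of_len V E m z b" by auto
  then show ?case using Suc.IH[of z] assms[of a z] by auto
qed

definition Ui :: "nat \<Rightarrow> int \<Rightarrow> bool \<times> nat" where "Ui n z = (False, nat (z mod int n))"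
definition Vi :: "nat \<Rightarrow> int \<Rightarrow> bool \<times> nat" where "Vi n z = (True, nat (z mod int n))"

lemma nat_mod_step: "0 < n \<Longrightarrow> nat ((z + c) mod int n) = (nat (z mod int n) + nat c) mod n" if "c \<ge> 0" for c
proof -
  assume n: "0 < n"
  have "int ((nat (z mod int n) + nat c) mod n) = (int (nat (z mod int n)) + int (nat c)) mod int n"
    by (simp add: of_nat_mod)
  also have "\<dots> = (z mod int n + c) mod int n" using n that by simp
  also have "\<dots> = (z + c) mod int n" by (simp add: mod_simps)
  finally show ?thesis by (metis nat_int)
qed

lemma in_V: "0 < n \<Longrightarrow> Ui n z \<in> gp_verts n" "0 < n \<Longrightarrow> Vi n z \<in> gp_verts n"
  unfolding Ui_def Vi_def gp_verts_def by (auto simp: nat_less_iff)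

lemma adj_rim: "0 < n \<Longrightarrow> gp_adj n 4 (Ui n z) (Ui n (z+1)) \<and> gp_adj n 4 (Ui n (z+1)) (Ui n z)"
  unfolding Ui_def gp_adj_def using nat_mod_step[of 1 n z] by auto

lemma adj_inner: "0 < n \<Longrightarrow> gp_adj n 4 (Vi n z) (Vi n (z+4)) \<and> gp_adj n 4 (Vi n (z+4)) (Vi n z)"
  unfolding Vi_def gp_adj_def using nat_mod_step[of 4 n z] by auto

lemma adj_spoke: "gp_adj n 4 (Ui n z) (Vi n z) \<and> gp_adj n 4 (Vi n z) (Ui n z)"
  unfolding Vi_def Ui_def gp_adj_def by auto

abbreviation W :: "nat \<Rightarrow> nat \<Rightarrow> bool \<times> nat \<Rightarrow> bool \<times> nat \<Rightarrow> bool" where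
  "W n m a b \<equiv> walk_of_len (gp_verts n) (gp_adj n 4) m a b"
abbreviation dist :: "nat \<Rightarrow> bool \<times> nat \<Rightarrow> bool \<times> nat \<Rightarrow> nat" where
  "dist n a b \<equiv> gdist (gp_verts n) (gp_adj n 4) a b"

lemma rim_walk_pos: "0 < n \<Longrightarrow> W n k (Ui n z) (Ui n (z + int k))"
proof (induction k arbitrary: z)
  case 0 then show ?case using in_V by simp
next
  case (Suc k)
  have "W n k (Ui n (z+1)) (Ui n (z + 1 + int k))" using Suc by blast
  then show ?case using adj_rim[of n z] in_V[of n] Suc.prems by (auto simp: add.assoc)
qed

lemma rim_walk_neg: "0 < n \<Longrightarrow> W n k (Ui n z) (Ui n (z - int k))"
proof (induction k arbitrary: z)
  case 0 then show ?case using in_V by simp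
next
  case (Suc k)
  have "W n k (Ui n (z-1)) (Ui n (z - 1 - int k))" using Suc by blast
  moreover have "gp_adj n 4 (Ui n z) (Ui n (z - 1))" using adj_rim[of n "z-1"] Suc.prems by simp
  ultimately show ?case using in_V[of n] Suc.prems by (auto simp: algebra_simps)
qed

lemma inner_walk_pos: "0 < n \<Longrightarrow> W n k (Vi n z) (Vi n (z + 4 * int k))"
proof (induction k arbitrary: z)
  case 0 then show ?case using in_V by simp
next
  case (Suc k)
  have "W n k (Vi n (z+4)) (Vi n (z + 4 + 4 * int k))" using Suc by blast
  then show ?case using adj_inner[of n z] in_V[of n] Suc.prems by (auto simp: algebra_simps)
qed

lemma inner_walk_neg: "0 < n \<Longrightarrow> W n k (Vi n z) (Vi n (z - 4 * int k))"
proof (induction k arbitrary: z)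
  case 0 then show ?case using in_V by simp
next
  case (Suc k)
  have "W n k (Vi n (z-4)) (Vi n (z - 4 - 4 * int k))" using Suc by blast
  moreover have "gp_adj n 4 (Vi n z) (Vi n (z - 4))" using adj_inner[of n "z-4"] Suc.prems by simp
  ultimately show ?case using in_V[of n] Suc.prems by (auto simp: algebra_simps)
qed

lemma rim_walk: "0 < n \<Longrightarrow> W n (nat \<bar>a\<bar>) (Ui n z) (Ui n (z + a))"
  using rim_walk_pos[of n "nat a" z] rim_walk_neg[of n "nat (-a)" z] by (cases "a \<ge> 0") auto

lemma inner_walk: "0 < n \<Longrightarrow> W n (nat \<bar>b\<bar>) (Vi n z) (Vi n (z + 4 * b))"
  using inner_walk_pos[of n "nat b" z] inner_walk_neg[of n "nat (-b)" z] by (cases "b \<ge> 0") auto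

lemma spoke_walk: "0 < n \<Longrightarrow> W n 1 (Ui n z) (Vi n z)" "0 < n \<Longrightarrow> W n 1 (Vi n z) (Ui n z)"
  using adj_spoke[of n z] in_V[of n z] by auto

lemma walk_uu: "0 < n \<Longrightarrow> W n (nat \<bar>a\<bar> + nat \<bar>b\<bar> + 2) (Ui n z) (Ui n (z + a + 4 * b))"
proof -
  assume n: "0 < n"
  have "W n (1 + nat \<bar>b\<bar>) (Ui n z) (Vi n (z + 4 * b))"
    using walk_trans[OF spoke_walk(1)[OF n] inner_walk[OF n]] .
  then have "W n (1 + nat \<bar>b\<bar> + 1) (Ui n z) (Ui n (z + 4 * b))"
    using walk_trans[OF _ spoke_walk(2)[OF n]] by blast
  then have "W n (1 + nat \<bar>b\<bar> + 1 + nat \<bar>a\<bar>) (Ui n z) (Ui n (z + 4 * b + a))"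
    using walk_trans[OF _ rim_walk[OF n]] by blast
  then show ?thesis by (simp add: algebra_simps)
qed

lemma walk_uv: "0 < n \<Longrightarrow> W n (nat \<bar>a\<bar> + nat \<bar>b\<bar> + 1) (Ui n z) (Vi n (z + a + 4 * b))"
proof -
  assume n: "0 < n"
  have "W n (nat \<bar>a\<bar> + 1) (Ui n z) (Vi n (z + a))"
    using walk_trans[OF rim_walk[OF n] spoke_walk(1)[OF n]] .
  then have "W n (nat \<bar>a\<bar> + 1 + nat \<bar>b\<bar>) (Ui n z) (Vi n (z + a + 4 * b))"
    using walk_trans[OF _ inner_walk[OF n]] by blast
  then show ?thesis by (simp add: algebra_simps)
qed

lemma walk_vu: "0 < n \<Longrightarrow> W n (nat \<bar>a\<bar> + nat \<bar>b\<bar> + 1) (Vi n z) (Ui n (z + a + 4 * b))"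
proof -
  assume n: "0 < n"
  have "W n (nat \<bar>b\<bar> + 1) (Vi n z) (Ui n (z + 4 * b))"
    using walk_trans[OF inner_walk[OF n] spoke_walk(2)[OF n]] .
  then have "W n (nat \<bar>b\<bar> + 1 + nat \<bar>a\<bar>) (Vi n z) (Ui n (z + 4 * b + a))"
    using walk_trans[OF _ rim_walk[OF n]] by blast
  then show ?thesis by (simp add: algebra_simps)
qed

lemma walk_vv: "0 < n \<Longrightarrow> W n (nat \<bar>a\<bar> + nat \<bar>b\<bar> + 2) (Vi n z) (Vi n (z + a + 4 * b))"
proof -
  assume n: "0 < n"
  have "W n (1 + nat \<bar>a\<bar>) (Vi n z) (Ui n (z + a))"
    using walk_trans[OF spoke_walk(2)[OF n] rim_walk[OF n]] .
  then have "W n (1 + nat \<bar>a\<bar> + 1) (Vi n z) (Vi n (z + a))"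
    using walk_trans[OF _ spoke_walk(1)[OF n]] by blast
  then have "W n (1 + nat \<bar>a\<bar> + 1 + nat \<bar>b\<bar>) (Vi n z) (Vi n (z + a + 4 * b))"
    using walk_trans[OF _ inner_walk[OF n]] by blast
  then show ?thesis by (simp add: algebra_simps)
qed

lemma rep_uu: "4 \<le> k \<Longrightarrow> \<exists>a b. int k = a + 4*b \<and> nat \<bar>a\<bar> + nat \<bar>b\<bar> + 2 = Guu k"
proof (cases k rule: split4)
  case (1 q) assume "4 \<le> k" then show ?thesis using 1 by (intro exI[of _ 0] exI[of _ "int q"]) (simp add: Guu_def mm_def)
next
  case (2 q) assume "4 \<le> k" then show ?thesis using 2 by (intro exI[of _ 1] exI[of _ "int q"]) (simp add: Guu_def mm_def)
next
  case (3 q) assume "4 \<le> k" then show ?thesis using 3 by (intro exI[of _ 2] exI[of _ "int q"]) (simp add: Guu_def mm_def)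
next
  case (4 q) assume "4 \<le> k" then show ?thesis using 4 by (intro exI[of _ "-1"] exI[of _ "int q + 1"]) (simp add: Guu_def mm_def)
qed

lemma rep_uv: "\<exists>a b. int k = a + 4*b \<and> nat \<bar>a\<bar> + nat \<bar>b\<bar> + 1 = Guv k"
proof (cases k rule: split4)
  case (1 q) then show ?thesis by (intro exI[of _ 0] exI[of _ "int q"]) (simp add: Guv_def mm_def)
next
  case (2 q) then show ?thesis by (intro exI[of _ 1] exI[of _ "int q"]) (simp add: Guv_def mm_def)
next
  case (3 q) then show ?thesis by (intro exI[of _ 2] exI[of _ "int q"]) (simp add: Guv_def mm_def)
next
  case (4 q) then show ?thesis by (intro exI[of _ "-1"] exI[of _ "int q + 1"]) (simp add: Guv_def mm_def)
qed

lemma rep_vv: "k mod 4 \<noteq> 0 \<Longrightarrow> \<exists>a b. int k = a + 4*b \<and> nat \<bar>a\<bar> + nat \<bar>b\<bar> + 2 = Gvv k"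
proof (cases k rule: split4)
  case (1 q) assume "k mod 4 \<noteq> 0" then show ?thesis using 1 by simp
next
  case (2 q) then show ?thesis by (intro exI[of _ 1] exI[of _ "int q"]) (simp add: Gvv_def mm_def)
next
  case (3 q) then show ?thesis by (intro exI[of _ 2] exI[of _ "int q"]) (simp add: Gvv_def mm_def)
next
  case (4 q) then show ?thesis by (intro exI[of _ "-1"] exI[of _ "int q + 1"]) (simp add: Gvv_def mm_def)
qed

lemma choose_sign: assumes "int k = a + 4*b" "nat \<bar>e\<bar> = k"
  shows "\<exists>a' b'. z + e = z + a' + 4*b' \<and> nat \<bar>a'\<bar> = nat \<bar>a\<bar> \<and> nat \<bar>b'\<bar> = nat \<bar>b\<bar>"
proof (cases "e \<ge> 0")
  case True then show ?thesis using assms by (intro exI[of _ a] exI[of _ b]) auto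
next
  case False then show ?thesis using assms by (intro exI[of _ "-a"] exI[of _ "-b"]) auto
qed

lemma ub_uu: "0 < n \<Longrightarrow> dist n (Ui n z) (Ui n (z + e)) \<le> Guu (nat \<bar>e\<bar>)"
proof -
  assume n: "0 < n"
  define k where "k = nat \<bar>e\<bar>"
  show ?thesis
  proof (cases "k < 4")
    case True
    then show ?thesis using gdist_le[OF rim_walk[OF n, of e z]] by (simp add: Guu_def k_def)
  next
    case False
    then have "4 \<le> k" by simp
    then obtain a b where ab: "int k = a + 4*b" "nat \<bar>a\<bar> + nat \<bar>b\<bar> + 2 = Guu k" using rep_uu by blast
    obtain a' b' where e': "z + e = z + a' + 4*b'" "nat \<bar>a'\<bar> = nat \<bar>a\<bar>" "nat \<bar>b'\<bar> = nat \<bar>b\<bar>"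
      using choose_sign[OF ab(1)] k_def by blast
    show ?thesis unfolding e'(1) using gdist_le[OF walk_uu[OF n, of a' b' z]] e' ab(2) k_def by simp
  qed
qed

lemma ub_uv: "0 < n \<Longrightarrow> dist n (Ui n z) (Vi n (z + e)) \<le> Guv (nat \<bar>e\<bar>)"
proof -
  assume n: "0 < n"
  define k where "k = nat \<bar>e\<bar>"
  obtain a b where ab: "int k = a + 4*b" "nat \<bar>a\<bar> + nat \<bar>b\<bar> + 1 = Guv k" using rep_uv by blast
  obtain a' b' where e': "z + e = z + a' + 4*b'" "nat \<bar>a'\<bar> = nat \<bar>a\<bar>" "nat \<bar>b'\<bar> = nat \<bar>b\<bar>"
    using choose_sign[OF ab(1)] k_def by blast
  show ?thesis unfolding e'(1) using gdist_le[OF walk_uv[OF n, of a' b' z]] e' ab(2) k_def by simp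
qed

lemma ub_vu: "0 < n \<Longrightarrow> dist n (Vi n z) (Ui n (z + e)) \<le> Guv (nat \<bar>e\<bar>)"
proof -
  assume n: "0 < n"
  define k where "k = nat \<bar>e\<bar>"
  obtain a b where ab: "int k = a + 4*b" "nat \<bar>a\<bar> + nat \<bar>b\<bar> + 1 = Guv k" using rep_uv by blast
  obtain a' b' where e': "z + e = z + a' + 4*b'" "nat \<bar>a'\<bar> = nat \<bar>a\<bar>" "nat \<bar>b'\<bar> = nat \<bar>b\<bar>"
    using choose_sign[OF ab(1)] k_def by blast
  show ?thesis unfolding e'(1) using gdist_le[OF walk_vu[OF n, of a' b' z]] e' ab(2) k_def by simp
qed

lemma ub_vv: "0 < n \<Longrightarrow> dist n (Vi n z) (Vi n (z + e)) \<le> Gvv (nat \<bar>e\<bar>)"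
proof -
  assume n: "0 < n"
  define k where "k = nat \<bar>e\<bar>"
  show ?thesis
  proof (cases "k mod 4 = 0")
    case True
    have ik: "int k = \<bar>e\<bar>" using k_def by simp
    have "(4::nat) dvd k" using True by presburger
    then have "(4::int) dvd \<bar>e\<bar>" unfolding ik[symmetric] by presburger
    then obtain c where c: "e = 4 * c" by auto
    have "k = 4 * nat \<bar>c\<bar>" using c k_def by (simp add: abs_mult nat_mult_distrib)
    then have "Gvv k = nat \<bar>c\<bar>" by (simp add: Gvv_def)
    then show ?thesis using gdist_le[OF inner_walk[OF n, of c z]] c k_def by simp
  next
    case False
    then obtain a b where ab: "int k = a + 4*b" "nat \<bar>a\<bar> + nat \<bar>b\<bar> + 2 = Gvv k" using rep_vv by blast
    obtain a' b' where e': "z + e = z + a' + 4*b'" "nat \<bar>a'\<bar> = nat \<bar>a\<bar>" "nat \<bar>b'\<bar> = nat \<bar>b\<bar>"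
      using choose_sign[OF ab(1)] k_def by blast
    show ?thesis unfolding e'(1) using gdist_le[OF walk_vv[OF n, of a' b' z]] e' ab(2) k_def by simp
  qed
qed

lemma idx_eq: assumes "0 < n" "x < n" "j < n"
  shows "nat ((int x + int ((j + n - x) mod n)) mod int n) = j"
    "nat ((int x + (int ((j + n - x) mod n) - int n)) mod int n) = j"
proof -
  have "(x + (j + n - x) mod n) mod n = (x + (j + n - x)) mod n" by (simp add: mod_add_right_eq)
  also have "x + (j + n - x) = j + n" using assms by simp
  finally have e: "(x + (j + n - x) mod n) mod n = j" using assms by simp
  have "nat ((int x + int ((j + n - x) mod n)) mod int n) = nat (int ((x + (j + n - x) mod n) mod n))"
    by (simp add: of_nat_mod)
  then show "nat ((int x + int ((j + n - x) mod n)) mod int n) = j" using e by simp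
  have "(int x + (int ((j + n - x) mod n) - int n)) mod int n = (int x + int ((j + n - x) mod n)) mod int n"
    by (simp add: algebra_simps)
  then show "nat ((int x + (int ((j + n - x) mod n) - int n)) mod int n) = j"
    using \<open>nat ((int x + int ((j + n - x) mod n)) mod int n) = j\<close> by simp
qed

lemma mod_shift: fixes x n i c :: nat shows "x < n \<Longrightarrow> ((i + c) mod n + n - x) mod n = ((i + n - x) mod n + c) mod n"
proof -
  assume x: "x < n"
  have "(i + c) mod n + n - x = (i + c) mod n + (n - x)" using x by linarith
  then have "((i + c) mod n + n - x) mod n = ((i + c) mod n + (n - x)) mod n" by simp
  also have "\<dots> = (i + c + (n - x)) mod n" by (simp add: mod_add_left_eq)
  also have "\<dots> = (i + (n - x) + c) mod n" by (simp add: algebra_simps)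
  also have "\<dots> = ((i + (n - x)) mod n + c) mod n" by (simp add: mod_add_left_eq)
  also have "i + (n - x) = i + n - x" using x by (simp add: less_imp_le)
  finally show ?thesis .
qed

definition Pot :: "nat \<Rightarrow> nat \<Rightarrow> (nat \<Rightarrow> nat) \<Rightarrow> (nat \<Rightarrow> nat) \<Rightarrow> bool \<times> nat \<Rightarrow> nat" where
  "Pot n x Ga Gb z = (let d = (snd z + n - x) mod n in
     if fst z then min (Gb d) (Gb (n - d)) else min (Ga d) (Ga (n - d)))"

lemma pot_lip:
  fixes Ga Gb :: "nat \<Rightarrow> nat"
  assumes r1: "\<And>k. Ga (Suc k) \<le> Ga k + 1" and r2: "\<And>k. Ga k \<le> Ga (Suc k) + 1"
    and i1: "\<And>k. Gb (k+4) = Gb k + 1" and i2: "\<And>k. Gb k \<ge> k div 4"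
    and i3: "\<And>j. j \<le> 4 \<Longrightarrow> Gb j \<le> Gb (4 - j) + 1 \<and> Gb j \<le> 4"
    and s1: "\<And>k. Ga k \<le> Gb k + 1" and s2: "\<And>k. Gb k \<le> Ga k + 1"
    and n: "24 < n" and x: "x < n"
    and z: "z \<in> gp_verts n" "z' \<in> gp_verts n" "gp_adj n 4 z z'"
  shows "Pot n x Ga Gb z' \<le> Pot n x Ga Gb z + 1"
proof -
  obtain b1 i1 b2 i2 where zz: "z = (b1, i1)" "z' = (b2, i2)" by (cases z, cases z')
  have lt: "i1 < n" "i2 < n" using z zz by (auto simp: gp_verts_def)
  define d1 where "d1 = (i1 + n - x) mod n"
  define d2 where "d2 = (i2 + n - x) mod n"
  have dl: "d1 < n" "d2 < n" using n by (auto simp: d1_def d2_def)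
  have P1: "Pot n x Ga Gb z = (if b1 then min (Gb d1) (Gb (n - d1)) else min (Ga d1) (Ga (n - d1)))"
    by (simp add: Pot_def zz d1_def Let_def)
  have P2: "Pot n x Ga Gb z' = (if b2 then min (Gb d2) (Gb (n - d2)) else min (Ga d2) (Ga (n - d2)))"
    by (simp add: Pot_def zz d2_def Let_def)
  consider (ff) "\<not> b1" "\<not> b2" "i2 = (i1 + 1) mod n \<or> i1 = (i2 + 1) mod n"
    | (tt) "b1" "b2" "i2 = (i1 + 4) mod n \<or> i1 = (i2 + 4) mod n"
    | (sp) "b1 \<noteq> b2" "i1 = i2"
    using z(3) zz by (cases b1; cases b2) (auto simp: gp_adj_def)
  then show ?thesis
  proof cases
    case ff
    from ff(3) consider "i2 = (i1 + 1) mod n" | "i1 = (i2 + 1) mod n" by blast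
    then consider "d2 = (d1 + 1) mod n" | "d1 = (d2 + 1) mod n"
    proof cases
      case 1 then have "d2 = (d1 + 1) mod n" unfolding d1_def d2_def by (simp only: mod_shift[OF x])
      then show ?thesis using that by blast
    next
      case 2 then have "d1 = (d2 + 1) mod n" unfolding d1_def d2_def by (simp only: mod_shift[OF x])
      then show ?thesis using that by blast
    qed
    then show ?thesis
    proof cases
      case 1 then show ?thesis using D_rim_gen[of Ga d1 n, OF r1 r2 dl(1)] P1 P2 ff by simp
    next
      case 2 then show ?thesis using D_rim_gen[of Ga d2 n, OF r1 r2 dl(2)] P1 P2 ff by simp
    qed
  next
    case tt
    from tt(3) consider "i2 = (i1 + 4) mod n" | "i1 = (i2 + 4) mod n" by blast
    then consider "d2 = (d1 + 4) mod n" | "d1 = (d2 + 4) mod n"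
    proof cases
      case 1 then have "d2 = (d1 + 4) mod n" unfolding d1_def d2_def by (simp only: mod_shift[OF x])
      then show ?thesis using that by blast
    next
      case 2 then have "d1 = (d2 + 4) mod n" unfolding d1_def d2_def by (simp only: mod_shift[OF x])
      then show ?thesis using that by blast
    qed
    then show ?thesis
    proof cases
      case 1 then show ?thesis using D_inner_gen[of Gb d1 n, OF i1 i2 i3 dl(1) n] P1 P2 tt by simp
    next
      case 2 then show ?thesis using D_inner_gen[of Gb d2 n, OF i1 i2 i3 dl(2) n] P1 P2 tt by simp
    qed
  next
    case sp
    then have "d1 = d2" by (simp add: d1_def d2_def)
    then show ?thesis using P1 P2 sp s1[of d1] s2[of d1] s1[of "n-d1"] s2[of "n-d1"]
      by (cases b1) (auto simp: min_def)
  qed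
qed

lemma Ui_x: "x < n \<Longrightarrow> Ui n (int x) = (False, x)" "x < n \<Longrightarrow> Vi n (int x) = (True, x)"
  unfolding Ui_def Vi_def by (simp_all add: of_nat_mod[symmetric])

lemma dist_exact_gen:
  fixes Ga Gb :: "nat \<Rightarrow> nat"
  assumes r1: "\<And>k. Ga (Suc k) \<le> Ga k + 1" and r2: "\<And>k. Ga k \<le> Ga (Suc k) + 1"
    and i1: "\<And>k. Gb (k+4) = Gb k + 1" and i2: "\<And>k. Gb k \<ge> k div 4"
    and i3: "\<And>j. j \<le> 4 \<Longrightarrow> Gb j \<le> Gb (4 - j) + 1 \<and> Gb j \<le> 4"
    and s1: "\<And>k. Ga k \<le> Gb k + 1" and s2: "\<And>k. Gb k \<le> Ga k + 1"
    and n: "24 < n" and x: "x < n"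
    and src0: "Pot n x Ga Gb src = 0"
    and conn: "\<And>z. z \<in> gp_verts n \<Longrightarrow> \<exists>m. W n m src z"
    and ub: "\<And>z. z \<in> gp_verts n \<Longrightarrow> dist n src z \<le> Pot n x Ga Gb z"
    and z: "z \<in> gp_verts n"
  shows "dist n src z = Pot n x Ga Gb z"
proof -
  obtain m where "W n m src z" using conn[OF z] by blast
  then have w: "W n (dist n src z) src z" by (rule gdist_walk)
  have "Pot n x Ga Gb z \<le> Pot n x Ga Gb src + dist n src z"
    by (rule potential_walk[OF _ w]) (rule pot_lip[OF r1 r2 i1 i2 i3 s1 s2 n x], auto)
  then show ?thesis using ub[OF z] src0 by simp
qed

lemma Guu_lip_all: "Guu (Suc k) \<le> Guu k + 1" "Guu k \<le> Guu (Suc k) + 1" by (rule Guu_lip1)+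

lemma dist_U:
  assumes n: "24 < n" and x: "x < n" and j: "j < n"
  shows "dist n (False, x) (False, j) = Duu n ((j + n - x) mod n)"
    "dist n (False, x) (True, j) = Duv n ((j + n - x) mod n)"
proof -
  have n0: "0 < n" using n by simp
  have src: "(False, x) = Ui n (int x)" using Ui_x x by simp
  have conn: "\<exists>m. W n m (False, x) z" if "z \<in> gp_verts n" for z
  proof -
    obtain b i where zi: "z = (b, i)" "i < n" using \<open>z \<in> gp_verts n\<close> by (cases z) (auto simp: gp_verts_def)
    have e: "Ui n (int x + (int i - int x)) = (False, i)" "Vi n (int x + (int i - int x) + 4 * 0) = (True, i)"
      using Ui_x zi by auto
    show ?thesis using rim_walk[OF n0, of "int i - int x" "int x"] walk_uv[OF n0, of "int i - int x" 0 "int x"]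
      unfolding src zi e by (cases b) (simp_all only: simp_thms; blast)+
  qed
  have ub: "dist n (False, x) z \<le> Pot n x Guu Guv z" if "z \<in> gp_verts n" for z
  proof -
    obtain b i where zi: "z = (b, i)" "i < n" using \<open>z \<in> gp_verts n\<close> by (cases z) (auto simp: gp_verts_def)
    define d where "d = (i + n - x) mod n"
    have dl: "d < n" using n0 by (simp add: d_def)
    have na: "nat \<bar>int d\<bar> = d" "nat \<bar>int d - int n\<bar> = n - d" using dl by auto
    have e1: "Ui n (int x + int d) = (False, i)" "Ui n (int x + (int d - int n)) = (False, i)"
      "Vi n (int x + int d) = (True, i)" "Vi n (int x + (int d - int n)) = (True, i)"
      using idx_eq[OF n0 x zi(2)] unfolding d_def Ui_def Vi_def by auto
    show ?thesis
    proof (cases b)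
      case True
      then show ?thesis using ub_uv[OF n0, of "int x" "int d"] ub_uv[OF n0, of "int x" "int d - int n"]
        unfolding src zi e1 na by (simp add: Pot_def d_def[symmetric] Let_def)
    next
      case False
      then show ?thesis using ub_uu[OF n0, of "int x" "int d"] ub_uu[OF n0, of "int x" "int d - int n"]
        unfolding src zi e1 na by (simp add: Pot_def d_def[symmetric] Let_def)
    qed
  qed
  have src0: "Pot n x Guu Guv (False, x) = 0" by (simp add: Pot_def Guu_def)
  have G: "\<And>j. j \<le> 4 \<Longrightarrow> Guv j \<le> Guv (4 - j) + 1 \<and> Guv j \<le> 4" using small4 by fastforce
  note ex = dist_exact_gen[OF Guu_lip_all Guv_4 Gl(1) G spoke1(1) spoke1(2) n x src0 conn ub]
  show "dist n (False, x) (False, j) = Duu n ((j + n - x) mod n)"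
    using ex[of "(False, j)"] j by (simp add: gp_verts_def Pot_def Duu_def Let_def)
  show "dist n (False, x) (True, j) = Duv n ((j + n - x) mod n)"
    using ex[of "(True, j)"] j by (simp add: gp_verts_def Pot_def Duv_def Let_def)
qed

lemma dist_V:
  assumes n: "24 < n" and x: "x < n" and j: "j < n"
  shows "dist n (True, x) (False, j) = Duv n ((j + n - x) mod n)"
    "dist n (True, x) (True, j) = Dvv n ((j + n - x) mod n)"
proof -
  have n0: "0 < n" using n by simp
  have src: "(True, x) = Vi n (int x)" using Ui_x x by simp
  have conn: "\<exists>m. W n m (True, x) z" if "z \<in> gp_verts n" for z
  proof -
    obtain b i where zi: "z = (b, i)" "i < n" using \<open>z \<in> gp_verts n\<close> by (cases z) (auto simp: gp_verts_def)
    have e: "Ui n (int x + (int i - int x) + 4 * 0) = (False, i)" "Vi n (int x + (int i - int x) + 4 * 0) = (True, i)"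
      using Ui_x zi by auto
    show ?thesis using walk_vu[OF n0, of "int i - int x" 0 "int x"] walk_vv[OF n0, of "int i - int x" 0 "int x"]
      unfolding src zi e by (cases b) (simp_all only: simp_thms; blast)+
  qed
  have ub: "dist n (True, x) z \<le> Pot n x Guv Gvv z" if "z \<in> gp_verts n" for z
  proof -
    obtain b i where zi: "z = (b, i)" "i < n" using \<open>z \<in> gp_verts n\<close> by (cases z) (auto simp: gp_verts_def)
    define d where "d = (i + n - x) mod n"
    have dl: "d < n" using n0 by (simp add: d_def)
    have na: "nat \<bar>int d\<bar> = d" "nat \<bar>int d - int n\<bar> = n - d" using dl by auto
    have e1: "Ui n (int x + int d) = (False, i)" "Ui n (int x + (int d - int n)) = (False, i)"
      "Vi n (int x + int d) = (True, i)" "Vi n (int x + (int d - int n)) = (True, i)"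
      using idx_eq[OF n0 x zi(2)] unfolding d_def Ui_def Vi_def by auto
    show ?thesis
    proof (cases b)
      case True
      then show ?thesis using ub_vv[OF n0, of "int x" "int d"] ub_vv[OF n0, of "int x" "int d - int n"]
        unfolding src zi e1 na by (simp add: Pot_def d_def[symmetric] Let_def)
    next
      case False
      then show ?thesis using ub_vu[OF n0, of "int x" "int d"] ub_vu[OF n0, of "int x" "int d - int n"]
        unfolding src zi e1 na by (simp add: Pot_def d_def[symmetric] Let_def)
    qed
  qed
  have src0: "Pot n x Guv Gvv (True, x) = 0" by (simp add: Pot_def Gvv_def)
  have G: "\<And>j. j \<le> 4 \<Longrightarrow> Gvv j \<le> Gvv (4 - j) + 1 \<and> Gvv j \<le> 4" using small4 by fastforce
  note ex = dist_exact_gen[OF Guv_lip1 Gvv_4 Gl(2) G spoke1(4) spoke1(3) n x src0 conn ub]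
  show "dist n (True, x) (False, j) = Duv n ((j + n - x) mod n)"
    using ex[of "(False, j)"] j by (simp add: gp_verts_def Pot_def Duv_def Let_def)
  show "dist n (True, x) (True, j) = Dvv n ((j + n - x) mod n)"
    using ex[of "(True, j)"] j by (simp add: gp_verts_def Pot_def Dvv_def Let_def)
qed

definition phi :: "nat \<Rightarrow> nat \<Rightarrow> nat \<Rightarrow> int" where
  "phi n t s = sgn (int (Duv n ((t + n - s) mod n)) - int (Duu n s))
             + sgn (int (Dvv n s) - int (Duv n ((t + n - s) mod n)))"

definition Splus :: "nat \<Rightarrow> nat set" where "Splus n = {1, 2, 3, n - 1, n - 2, n - 3}"

lemma D_sym: assumes "i < n"
  shows "Duu n ((n - i) mod n) = Duu n i" "Duv n ((n - i) mod n) = Duv n i" "Dvv n ((n - i) mod n) = Dvv n i"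
proof -
  have "i = 0 \<or> (0 < i \<and> (n - i) mod n = n - i \<and> n - (n - i) = i)" using assms by auto
  then show "Duu n ((n - i) mod n) = Duu n i" "Duv n ((n - i) mod n) = Duv n i" "Dvv n ((n - i) mod n) = Dvv n i"
    by (auto simp: Duu_def Duv_def Dvv_def min.commute)
qed

lemma mod_back: fixes s t n :: nat assumes "s < n" "t < n"
  shows "(t + n - (t + n - s) mod n) mod n = s"
proof -
  have h: "(t + n - s) mod n < n" using assms by simp
  have "int ((t + n - (t + n - s) mod n) mod n) = (int t + int n - int ((t + n - s) mod n)) mod int n"
    using h by (simp add: of_nat_mod of_nat_diff)
  also have "int ((t + n - s) mod n) = (int t + int n - int s) mod int n"
    using assms by (simp add: of_nat_mod of_nat_diff)
  also have "(int t + int n - (int t + int n - int s) mod int n) mod int n = (int t + int n - (int t + int n - int s)) mod int n"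
    by (simp add: mod_diff_right_eq)
  also have "\<dots> = int s" using assms by simp
  finally show ?thesis by simp
qed

lemma Gvv_le_Guu: "k = 0 \<or> 4 \<le> k \<Longrightarrow> Gvv k \<le> Guu k"
  by (cases k rule: split4) (auto simp: Gvv_def Guu_def mm_def)

lemma a_ge_c: assumes "24 < n" "s < n" "s \<notin> Splus n" shows "Dvv n s \<le> Duu n s"
proof (cases "s = 0")
  case True then show ?thesis by (simp add: Dvv_def Duu_def Gvv_def Guu_def)
next
  case False
  then have "4 \<le> s" "4 \<le> n - s" using assms by (auto simp: Splus_def)
  then show ?thesis using Gvv_le_Guu[of s] Gvv_le_Guu[of "n - s"] by (auto simp: Dvv_def Duu_def)
qed

lemma phi_le0: assumes "24 < n" "s < n" "s \<notin> Splus n" shows "phi n t s \<le> 0"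
proof -
  have "int (Dvv n s) \<le> int (Duu n s)" using a_ge_c[OF assms] by simp
  then show ?thesis unfolding phi_def by (auto simp: sgn_if)
qed

lemma verts_split: "gp_verts n = Pair False ` {..<n} \<union> Pair True ` {..<n}"
  unfolding gp_verts_def by (auto simp: image_iff)

lemma card_diff_sum:
  fixes A :: "'a set" and f g :: "'a \<Rightarrow> nat"
  assumes "finite A"
  shows "int (card {w \<in> A. f w < g w}) - int (card {w \<in> A. g w < f w}) = (\<Sum>w\<in>A. sgn (int (g w) - int (f w)))"
proof -
  have "(\<Sum>w\<in>A. sgn (int (g w) - int (f w))) = (\<Sum>w\<in>A. of_bool (f w < g w) - of_bool (g w < f w))"
    by (rule sum.cong) (auto simp: sgn_if)
  also have "\<dots> = (\<Sum>w\<in>A. (of_bool (f w < g w) :: int)) - (\<Sum>w\<in>A. of_bool (g w < f w))"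
    by (simp add: sum_subtractf)
  also have "\<dots> = int (card (A \<inter> {w. f w < g w})) - int (card (A \<inter> {w. g w < f w}))"
    using assms by simp
  also have "A \<inter> {w. f w < g w} = {w \<in> A. f w < g w}" by auto
  also have "A \<inter> {w. g w < f w} = {w \<in> A. g w < f w}" by auto
  finally show ?thesis by simp
qed

lemma Wdiff:
  assumes n: "24 < n" and t: "t < n"
  shows "int (card (Wset (gp_verts n) (gp_adj n 4) (False, 0) (True, t)))
       - int (card (Wset (gp_verts n) (gp_adj n 4) (True, t) (False, 0))) = (\<Sum>s<n. phi n t s)"
proof -
  let ?V = "gp_verts n"
  define f where "f w = sgn (int (dist n w (True, t)) - int (dist n w (False, 0)))" for w
  have fin: "finite ?V" unfolding verts_split by simp
  have "int (card (Wset ?V (gp_adj n 4) (False, 0) (True, t))) - int (card (Wset ?V (gp_adj n 4) (True, t) (False, 0)))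
      = (\<Sum>w\<in>?V. f w)"
    unfolding Wset_def f_def by (rule card_diff_sum[OF fin])
  also have "\<dots> = (\<Sum>s<n. f (False, s)) + (\<Sum>s<n. f (True, s))"
    unfolding verts_split by (subst sum.union_disjoint) (auto simp: sum.reindex inj_on_def)
  also have "(\<Sum>s<n. f (True, s)) = (\<Sum>s<n. f (True, (t + n - s) mod n))"
    by (rule sum.reindex_bij_witness[where i = "\<lambda>s. (t + n - s) mod n" and j = "\<lambda>s. (t + n - s) mod n"])
       (use n t mod_back in auto)
  also have "(\<Sum>s<n. f (False, s)) + (\<Sum>s<n. f (True, (t + n - s) mod n)) = (\<Sum>s<n. phi n t s)"
    unfolding sum.distrib[symmetric]
  proof (rule sum.cong)
    fix s assume "s \<in> {..<n}"
    then have s: "s < n" by simp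
    define h where "h = (t + n - s) mod n"
    have h: "h < n" using s by (simp add: h_def)
    have "f (False, s) = sgn (int (Duv n h) - int (Duu n s))"
      unfolding f_def using dist_U[OF n s t] dist_U[OF n s, of 0] D_sym[OF s] n by (simp add: h_def)
    moreover have "f (True, h) = sgn (int (Dvv n s) - int (Duv n h))"
      unfolding f_def using dist_V[OF n h t] dist_V[OF n h, of 0] D_sym[OF h] n mod_back[OF s t] by (simp add: h_def)
    ultimately show "f (False, s) + f (True, (t + n - s) mod n) = phi n t s"
      unfolding phi_def h_def by simp
  qed simp
  finally show ?thesis .
qed

definition good :: "nat \<Rightarrow> nat \<Rightarrow> bool" where
  "good n l \<longleftrightarrow> (\<exists>t<n. Duv n t = l \<and> (\<exists>P. P \<subseteq> {..<n} \<and> Splus n \<subseteq> P \<and> sum (phi n t) P < 0))"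

lemma good_imp:
  assumes n: "24 < n" and g: "good n l"
  shows "\<not> l_distance_balanced (gp_verts n) (gp_adj n 4) l"
proof -
  obtain t P where t: "t < n" "Duv n t = l" and P: "P \<subseteq> {..<n}" "Splus n \<subseteq> P" "sum (phi n t) P < 0"
    using g unfolding good_def by blast
  have "sum (phi n t) ({..<n} - P) \<le> 0"
    by (rule sum_nonpos) (use P n phi_le0 in blast)
  moreover have "(\<Sum>s<n. phi n t s) = sum (phi n t) P + sum (phi n t) ({..<n} - P)"
    using sum.subset_diff[OF P(1) finite_lessThan, of "phi n t"] by simp
  ultimately have "(\<Sum>s<n. phi n t s) < 0" using P(3) by linarith
  then have ne: "card (Wset (gp_verts n) (gp_adj n 4) (False, 0) (True, t)) \<noteq> card (Wset (gp_verts n) (gp_adj n 4) (True, t) (False, 0))"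
    using Wdiff[OF n t(1)] by auto
  have d: "dist n (False, 0) (True, t) = l" using dist_U(2)[OF n _ t(1), of 0] n t by simp
  have "(False, 0) \<in> gp_verts n" "(True, t) \<in> gp_verts n" using n t by (auto simp: gp_verts_def)
  then show ?thesis unfolding l_distance_balanced_def using d ne by blast
qed

lemma le_div8: fixes q m :: nat shows "8 * q \<le> m \<Longrightarrow> q \<le> m div 8"
  by (simp add: less_eq_div_iff_mult_less_eq mult.commute)

lemma G_le_K: assumes "2 * m \<le> n"
  shows "Guu m \<le> (n + 4) div 8 + 3" "Guv m \<le> (n + 4) div 8 + 3" "Gvv m \<le> (n + 4) div 8 + 3"
proof -
  have "Guu m \<le> (n + 4) div 8 + 3 \<and> Guv m \<le> (n + 4) div 8 + 3 \<and> Gvv m \<le> (n + 4) div 8 + 3"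
  proof (cases m rule: split4)
    case (1 q)
    have "8 * q \<le> n + 4" using assms 1 by simp
    then have "q \<le> (n + 4) div 8" by (rule le_div8)
    then show ?thesis using 1 by (simp add: Guu_def Guv_def Gvv_def mm_def)
  next
    case (2 q)
    have "8 * q \<le> n + 4" using assms 2 by simp
    then have "q \<le> (n + 4) div 8" by (rule le_div8)
    then show ?thesis using 2 by (simp add: Guu_def Guv_def Gvv_def mm_def)
  next
    case (3 q)
    have "8 * (q + 1) \<le> n + 4" using assms 3 by simp
    then have "q + 1 \<le> (n + 4) div 8" by (rule le_div8)
    then show ?thesis using 3 by (simp add: Guu_def Guv_def Gvv_def mm_def)
  next
    case (4 q)
    have "8 * (q + 1) \<le> n + 4" using assms 4 by simp
    then have "q + 1 \<le> (n + 4) div 8" by (rule le_div8)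
    then show ?thesis using 4 by (simp add: Guu_def Guv_def Gvv_def mm_def)
  qed
  then show "Guu m \<le> (n + 4) div 8 + 3" "Guv m \<le> (n + 4) div 8 + 3" "Gvv m \<le> (n + 4) div 8 + 3" by auto
qed

lemma D_le_K: assumes "i \<le> n"
  shows "Duu n i \<le> (n + 4) div 8 + 3" "Duv n i \<le> (n + 4) div 8 + 3" "Dvv n i \<le> (n + 4) div 8 + 3"
proof -
  have "2 * i \<le> n \<or> 2 * (n - i) \<le> n" using assms by linarith
  then show "Duu n i \<le> (n + 4) div 8 + 3" "Duv n i \<le> (n + 4) div 8 + 3" "Dvv n i \<le> (n + 4) div 8 + 3"
    using G_le_K[of i n] G_le_K[of "n - i" n] unfolding Duu_def Duv_def Dvv_def by (auto simp: min_le_iff_disj)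
qed

lemma diam_le:
  assumes n: "24 < n"
  shows "gdiam (gp_verts n) (gp_adj n 4) \<le> (n + 4) div 8 + 3"
proof -
  let ?S = "{gdist (gp_verts n) (gp_adj n 4) x y | x y. x \<in> gp_verts n \<and> y \<in> gp_verts n}"
  have fin: "finite (gp_verts n)" unfolding verts_split by simp
  have "?S = (\<lambda>(x, y). gdist (gp_verts n) (gp_adj n 4) x y) ` (gp_verts n \<times> gp_verts n)" by auto
  then have "finite ?S" using fin by simp
  moreover have "(False, 0) \<in> gp_verts n" using n by (auto simp: gp_verts_def)
  then have "?S \<noteq> {}" by blast
  moreover have "\<forall>d\<in>?S. d \<le> (n + 4) div 8 + 3"
  proof safe
    fix x y assume "x \<in> gp_verts n" "y \<in> gp_verts n"
    then obtain b i c j where xy: "x = (b, i)" "y = (c, j)" "i < n" "j < n" by (auto simp: gp_verts_def)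
    have le: "(j + n - i) mod n \<le> n" using n by (simp add: less_imp_le)
    show "dist n x y \<le> (n + 4) div 8 + 3"
      using dist_U[OF n xy(3,4)] dist_V[OF n xy(3,4)] D_le_K[OF le] unfolding xy by (cases b; cases c) auto
  qed
  ultimately show ?thesis unfolding gdiam_def by simp
qed

lemma Duv_lip_k: assumes "i < n"
  shows "Duv n i \<le> Duv n ((i + k) mod n) + k \<and> Duv n ((i + k) mod n) \<le> Duv n i + k"
proof (induction k)
  case 0 then show ?case using assms by simp
next
  case (Suc k)
  have n: "0 < n" using assms by simp
  have e: "(i + Suc k) mod n = ((i + k) mod n + 1) mod n" by (simp add: mod_Suc_eq)
  have "(i + k) mod n < n" using n by simp
  from D_rim_gen[of Guv, OF Guv_lip1 this] show ?case using Suc unfolding e Duv_def by linarith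
qed

lemma mod_plus_back: fixes s t n :: nat assumes "s \<le> n" "t < n" shows "((t + n - s) mod n + s) mod n = t"
proof -
  have "((t + n - s) mod n + s) mod n = (t + n - s + s) mod n" by (simp add: mod_add_left_eq)
  also have "t + n - s + s = t + n" using assms by simp
  finally show ?thesis using assms by simp
qed

lemma Splus_phi_le0:
  assumes n: "24 < n" and t: "t < n" and l: "Duv n t = l" "8 \<le> l" and s: "s \<in> Splus n"
  shows "phi n t s \<le> 0"
proof -
  define b where "b = Duv n ((t + n - s) mod n)"
  have bl: "5 \<le> b" and c4: "Dvv n s \<le> 4"
  proof -
    consider (lo) k where "k \<in> {1,2,3}" "s = k" | (hi) k where "k \<in> {1,2,3}" "s = n - k"
      using s unfolding Splus_def by auto
    then have "5 \<le> b \<and> Dvv n s \<le> 4"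
    proof cases
      case lo
      have j: "(t + n - s) mod n < n" using n by simp
      have "Duv n t \<le> b + k" using Duv_lip_k[OF j, of k] mod_plus_back[of s n t] lo t n unfolding b_def by auto
      moreover have "Dvv n s \<le> Gvv k" using lo by (simp add: Dvv_def)
      moreover have "Gvv k \<le> 4" using lo(1) by (auto simp: Gvv_def mm_def)
      ultimately show ?thesis using l lo by auto
    next
      case hi
      have e: "(t + n - s) mod n = (t + k) mod n" using hi n by auto
      have "Duv n t \<le> b + k" using Duv_lip_k[OF t, of k] unfolding b_def e by auto
      moreover have "Dvv n s \<le> Gvv k" using hi n by (auto simp: Dvv_def)
      moreover have "Gvv k \<le> 4" using hi(1) by (auto simp: Gvv_def mm_def)
      ultimately show ?thesis using l hi by auto
    qed
    then show "5 \<le> b" "Dvv n s \<le> 4" by auto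
  qed
  then show ?thesis unfolding phi_def b_def[symmetric] by (auto simp: sgn_if)
qed

lemma Guv_4q: "Guv (4*q + 2) = q + 3" "Guv (4*q + 3) = q + 3" "Guv (4*q) = q + 1"
  by (simp_all add: Guv_def mm_def)

lemma Guv_lb: "Guv m \<ge> m div 4 + 1" by (simp add: Guv_def)
lemma Guu_lb: "4 \<le> m \<Longrightarrow> Guu m \<ge> m div 4 + 2" by (simp add: Guu_def)

lemma Guv_ge:
  assumes "4*l \<le> m + 4 \<or> m + 7 = 4*l \<or> m + 6 = 4*l \<or> m + 5 = 4*l \<or> m + 10 = 4*l \<or> m + 9 = 4*l"
  shows "l \<le> Guv m"
proof (cases m rule: split4)
  case (1 q) then show ?thesis using assms by (simp add: Guv_def) presburger
next
  case (2 q) then show ?thesis using assms by (simp add: Guv_def mm_def) presburger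
next
  case (3 q) then show ?thesis using assms by (simp add: Guv_def mm_def) presburger
next
  case (4 q) then show ?thesis using assms by (simp add: Guv_def mm_def) presburger
qed

lemma phi_s0:
  assumes n: "24 < n" and l: "8 \<le> l" "8 * l \<le> n + 20" and t: "t < n" "4 * j \<le> t"
    and j: "j = l div 2" and g: "Guv (t - 4 * j) = l - j"
  shows "phi n t (4 * j) < 0"
proof -
  have j1: "4 \<le> j" "2 * j \<le> l" "l \<le> 2 * j + 1" using j l by auto
  have nj: "8 * j \<le> n" using j1 l by linarith
  have c: "Dvv n (4 * j) \<le> j" unfolding Dvv_def by (simp add: Gvv_def)
  have "Guu (4 * j) = j + 2" using j1 by (simp add: Guu_def mm_def)
  moreover have "Guu (n - 4 * j) \<ge> j + 2"
  proof -
    have "4 \<le> n - 4 * j" using nj j1 by linarith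
    moreover have "j \<le> (n - 4 * j) div 4" using nj by (simp add: le_div8 less_eq_div_iff_mult_less_eq)
    ultimately show ?thesis using Guu_lb[of "n - 4 * j"] by linarith
  qed
  ultimately have a: "Duu n (4 * j) = j + 2" unfolding Duu_def by simp
  have e: "(t + n - 4 * j) mod n = t - 4 * j" using t by (simp add: le_mod_geq)
  define b where "b = Duv n (t - 4 * j)"
  have b1: "b \<le> l - j" unfolding b_def Duv_def using g by simp
  have "j \<le> Guv (n - (t - 4 * j))"
  proof -
    have "4 * j \<le> n - (t - 4 * j)" using t by linarith
    then have "j \<le> (n - (t - 4 * j)) div 4" by (simp add: less_eq_div_iff_mult_less_eq)
    then show ?thesis using Guv_lb[of "n - (t - 4 * j)"] by linarith
  qed
  then have b2: "j \<le> b" unfolding b_def Duv_def using g j1 by simp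
  have "phi n t (4 * j) = sgn (int b - int (j + 2)) + sgn (int (Dvv n (4 * j)) - int b)"
    unfolding phi_def e b_def a by simp
  moreover have "int b \<le> int (j + 2)" using b1 j1 by linarith
  moreover have "int (Dvv n (4 * j)) \<le> int j" using c by simp
  ultimately show ?thesis using b2 by (auto simp: sgn_if)
qed

lemma good_big:
  assumes n: "24 < n" and l: "8 \<le> l" "l \<le> (n + 4) div 8 + 2"
  shows "good n l"
proof -
  have "8 * ((n + 4) div 8) \<le> n + 4" by simp
  then have l20: "8 * l \<le> n + 20" using l by linarith
  define j where "j = l div 2"
  have j1: "4 \<le> j" "2 * j \<le> l" "l \<le> 2 * j + 1" using j_def l by auto
  define t where "t = (if n + 18 = 8 * l then 4 * l - 9 else 4 * l - 10)"
  have tq: "t = 4 * (l - 3) + 2 \<or> t = 4 * (l - 3) + 3" using l by (auto simp: t_def)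
  have tl: "t < n" "4 * j \<le> t" using l20 l j1 by (auto simp: t_def)
  have gt: "Guv t = l" using tq l Guv_4q[of "l - 3"] by auto
  have gnt: "l \<le> Guv (n - t)"
  proof (cases "n + 18 = 8 * l")
    case True
    then have "n - t + 9 = 4 * l" using l by (simp add: t_def)
    then show ?thesis using Guv_ge by simp
  next
    case False
    have "n - t = n + 10 - 4 * l" using l20 l False by (simp add: t_def)
    then have "4*l \<le> (n - t) + 4 \<or> (n - t) + 7 = 4*l \<or> (n - t) + 6 = 4*l \<or> (n - t) + 5 = 4*l \<or> (n - t) + 10 = 4*l \<or> (n - t) + 9 = 4*l"
      using False l20 by presburger
    then show ?thesis by (rule Guv_ge)
  qed
  have d: "Duv n t = l" unfolding Duv_def using gt gnt by simp
  have g: "Guv (t - 4 * j) = l - j"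
  proof -
    have "t - 4 * j = 4 * (l - 3 - j) + 2 \<or> t - 4 * j = 4 * (l - 3 - j) + 3" using tq j1 by auto
    then show ?thesis using Guv_4q[of "l - 3 - j"] j1 by auto
  qed
  have neg: "phi n t (4 * j) < 0" by (rule phi_s0[OF n l(1) l20 tl j_def g])
  have notin: "4 * j \<notin> Splus n" using j1 l20 n unfolding Splus_def by auto
  have sp: "sum (phi n t) (Splus n) \<le> 0"
    by (rule sum_nonpos) (use Splus_phi_le0[OF n tl(1) d l(1)] in blast)
  have fin: "finite (Splus n)" by (simp add: Splus_def)
  have "sum (phi n t) (insert (4 * j) (Splus n)) < 0"
    using sp neg notin fin by simp
  moreover have "insert (4 * j) (Splus n) \<subseteq> {..<n}" using n tl unfolding Splus_def by auto
  ultimately show ?thesis unfolding good_def using tl(1) d by blast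
qed

lemma good_intro: "t < n \<Longrightarrow> Duv n t = l \<Longrightarrow> P \<subseteq> {..<n} \<Longrightarrow> Splus n \<subseteq> P \<Longrightarrow> sum (phi n t) P < 0 \<Longrightarrow> good n l"
  unfolding good_def by blast

lemma Guu_lb0: "Guu m \<ge> m div 4" by (simp add: Guu_def)

lemma D_eval:
  "k + 4 * Guu k \<le> n \<Longrightarrow> Duu n k = Guu k"
  "k + 4 * Guv k \<le> n \<Longrightarrow> Duv n k = Guv k"
  "k + 4 * Gvv k \<le> n \<Longrightarrow> Dvv n k = Gvv k"
proof -
  have h: "G k \<le> (n - k) div 4" if "k + 4 * G k \<le> n" for G :: "nat \<Rightarrow> nat"
    using that by (simp add: less_eq_div_iff_mult_less_eq)
  show "k + 4 * Guu k \<le> n \<Longrightarrow> Duu n k = Guu k" using h[of Guu] Guu_lb0[of "n - k"] by (simp add: Duu_def)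
  show "k + 4 * Guv k \<le> n \<Longrightarrow> Duv n k = Guv k" using h[of Guv] Gl(1)[of "n - k"] by (simp add: Duv_def)
  show "k + 4 * Gvv k \<le> n \<Longrightarrow> Dvv n k = Gvv k" using h[of Gvv] Gl(2)[of "n - k"] by (simp add: Dvv_def)
qed

lemma phi_eval_lo: "s \<le> t \<Longrightarrow> t < n \<Longrightarrow>
  phi n t s = sgn (int (Duv n (t - s)) - int (Duu n s)) + sgn (int (Dvv n s) - int (Duv n (t - s)))"
  unfolding phi_def by (simp add: le_mod_geq)

lemma phi_eval_hi: assumes "t < s" "s < n"
  shows "phi n t s = sgn (int (Duv n (s - t)) - int (Duu n s)) + sgn (int (Dvv n s) - int (Duv n (s - t)))"
proof -
  have "(t + n - s) mod n = n - (s - t)" using assms by simp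
  moreover have "Duv n (n - (s - t)) = Duv n (s - t)" using assms by (simp add: Duv_def min.commute)
  ultimately show ?thesis unfolding phi_def by simp
qed

lemma phi_eval_neg: assumes "0 < k" "t + k < n"
  shows "phi n t (n - k) = sgn (int (Duv n (t + k)) - int (Duu n k)) + sgn (int (Dvv n k) - int (Duv n (t + k)))"
proof -
  have "(t + n - (n - k)) mod n = t + k" using assms by simp
  moreover have "Duu n (n - k) = Duu n k" "Dvv n (n - k) = Dvv n k" using assms by (simp_all add: Duu_def Dvv_def min.commute)
  ultimately show ?thesis unfolding phi_def by simp
qed

lemma D_flip: "k \<le> n \<Longrightarrow> Duu n (n - k) = Duu n k" "k \<le> n \<Longrightarrow> Duv n (n - k) = Duv n k"
  "k \<le> n \<Longrightarrow> Dvv n (n - k) = Dvv n k"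
  by (simp_all add: Duu_def Duv_def Dvv_def min.commute)

lemmas evs2 = D_flip phi_eval_lo phi_eval_hi phi_eval_neg D_eval Guu_def Guv_def Gvv_def mm_def

lemma good_intro2: "t < n \<Longrightarrow> Duv n t = l \<Longrightarrow> set xs \<subseteq> {..<n} \<Longrightarrow> Splus n \<subseteq> set xs \<Longrightarrow> distinct xs
   \<Longrightarrow> sum_list (map (phi n t) xs) < 0 \<Longrightarrow> good n l"
  using good_intro[of t n l "set xs"] by (simp add: sum.distinct_set_conv_list)

lemma good_3: assumes "50 \<le> n" shows "good n 3"
  apply (rule good_intro2[where t=3 and xs="[1, 2, 3, n - 1, n - 2, n - 3, 4, 8, 12, 16]"])
  using assms apply (simp_all add: Splus_def D_eval Guv_def mm_def)
   apply (intro conjI; linarith)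
  apply (simp add: evs2)
  done

lemma good_4: assumes "50 \<le> n" shows "good n 4"
  apply (rule good_intro2[where t=12 and xs="[1, 2, 3, n - 1, n - 2, n - 3, 4, 8]"])
  using assms apply (simp_all add: Splus_def D_eval Guv_def mm_def)
   apply (intro conjI; linarith)
  apply (simp add: evs2)
  done

lemma good_5: assumes "50 \<le> n" shows "good n 5"
  apply (rule good_intro2[where t=13 and xs="[1, 2, 3, n - 1, n - 2, n - 3, 8]"])
  using assms apply (simp_all add: Splus_def D_eval Guv_def mm_def)
   apply (intro conjI; linarith)
  apply (simp add: evs2)
  done

lemma good_6: assumes "50 \<le> n" shows "good n 6"
  apply (rule good_intro2[where t=17 and xs="[1, 2, 3, n - 1, n - 2, n - 3, 8]"])
  using assms apply (simp_all add: Splus_def D_eval Guv_def mm_def)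
   apply (intro conjI; linarith)
  apply (simp add: evs2)
  done

lemma good_7: assumes "50 \<le> n" shows "good n 7"
  apply (rule good_intro2[where t=18 and xs="[1, 2, 3, n - 1, n - 2, n - 3, 12]"])
  using assms apply (simp_all add: Splus_def D_eval Guv_def mm_def)
   apply (intro conjI; linarith)
  apply (simp add: evs2)
  done

lemmas evs = phi_def Duv_def Duu_def Dvv_def Guu_def Guv_def Gvv_def mm_def

lemma gc_25_3: "good 25 3"
  apply (rule good_intro2[where t=8 and xs="[1, 2, 3, 24, 23, 22, 4, 13]"])
  apply (simp_all add: Splus_def Duv_def Guv_def mm_def)
  apply (simp add: evs)
  done

lemma gc_25_4: "good 25 4"
  apply (rule good_intro2[where t=12 and xs="[1, 2, 3, 24, 23, 22, 17]"])
  apply (simp_all add: Splus_def Duv_def Guv_def mm_def)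
  apply (simp add: evs)
  done

lemma gc_25_5: "good 25 5"
  apply (rule good_intro2[where t=11 and xs="[1, 2, 3, 24, 23, 22, 8, 13, 17]"])
  apply (simp_all add: Splus_def Duv_def Guv_def mm_def)
  apply (simp add: evs)
  done

lemma gc_26_3: "good 26 3"
  apply (rule good_intro2[where t=8 and xs="[1, 2, 3, 25, 24, 23, 4, 14]"])
  apply (simp_all add: Splus_def Duv_def Guv_def mm_def)
  apply (simp add: evs)
  done

lemma gc_26_4: "good 26 4"
  apply (rule good_intro2[where t=12 and xs="[1, 2, 3, 25, 24, 23, 4, 8, 14]"])
  apply (simp_all add: Splus_def Duv_def Guv_def mm_def)
  apply (simp add: evs)
  done

lemma gc_26_5: "good 26 5"
  apply (rule good_intro2[where t=13 and xs="[1, 2, 3, 25, 24, 23, 8]"])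
  apply (simp_all add: Splus_def Duv_def Guv_def mm_def)
  apply (simp add: evs)
  done

lemma gc_27_3: "good 27 3"
  apply (rule good_intro2[where t=8 and xs="[1, 2, 3, 26, 25, 24, 4, 15]"])
  apply (simp_all add: Splus_def Duv_def Guv_def mm_def)
  apply (simp add: evs)
  done

lemma gc_27_4: "good 27 4"
  apply (rule good_intro2[where t=12 and xs="[1, 2, 3, 26, 25, 24, 4, 8, 15]"])
  apply (simp_all add: Splus_def Duv_def Guv_def mm_def)
  apply (simp add: evs)
  done

lemma gc_27_5: "good 27 5"
  apply (rule good_intro2[where t=13 and xs="[1, 2, 3, 26, 25, 24, 8]"])
  apply (simp_all add: Splus_def Duv_def Guv_def mm_def)
  apply (simp add: evs)
  done

lemma gc_28_3: "good 28 3"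
  apply (rule good_intro2[where t=8 and xs="[1, 2, 3, 27, 26, 25, 4, 16]"])
  apply (simp_all add: Splus_def Duv_def Guv_def mm_def)
  apply (simp add: evs)
  done

lemma gc_28_4: "good 28 4"
  apply (rule good_intro2[where t=12 and xs="[1, 2, 3, 27, 26, 25, 20]"])
  apply (simp_all add: Splus_def Duv_def Guv_def mm_def)
  apply (simp add: evs)
  done

lemma gc_28_5: "good 28 5"
  apply (rule good_intro2[where t=13 and xs="[1, 2, 3, 27, 26, 25, 8]"])
  apply (simp_all add: Splus_def Duv_def Guv_def mm_def)
  apply (simp add: evs)
  done

lemma gc_28_6: "good 28 6"
  apply (rule good_intro2[where t=14 and xs="[1, 2, 3, 27, 26, 25, 8, 12, 16]"])
  apply (simp_all add: Splus_def Duv_def Guv_def mm_def)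
  apply (simp add: evs)
  done

lemma gc_29_3: "good 29 3"
  apply (rule good_intro2[where t=8 and xs="[1, 2, 3, 28, 27, 26, 4, 17]"])
  apply (simp_all add: Splus_def Duv_def Guv_def mm_def)
  apply (simp add: evs)
  done

lemma gc_29_4: "good 29 4"
  apply (rule good_intro2[where t=12 and xs="[1, 2, 3, 28, 27, 26, 4, 8]"])
  apply (simp_all add: Splus_def Duv_def Guv_def mm_def)
  apply (simp add: evs)
  done

lemma gc_29_5: "good 29 5"
  apply (rule good_intro2[where t=13 and xs="[1, 2, 3, 28, 27, 26, 8]"])
  apply (simp_all add: Splus_def Duv_def Guv_def mm_def)
  apply (simp add: evs)
  done

lemma gc_29_6: "good 29 6"
  apply (rule good_intro2[where t=14 and xs="[1, 2, 3, 28, 27, 26, 8, 12, 17]"])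
  apply (simp_all add: Splus_def Duv_def Guv_def mm_def)
  apply (simp add: evs)
  done

lemma gc_30_3: "good 30 3"
  apply (rule good_intro2[where t=8 and xs="[1, 2, 3, 29, 28, 27, 4, 14]"])
  apply (simp_all add: Splus_def Duv_def Guv_def mm_def)
  apply (simp add: evs)
  done

lemma gc_30_4: "good 30 4"
  apply (rule good_intro2[where t=12 and xs="[1, 2, 3, 29, 28, 27, 18]"])
  apply (simp_all add: Splus_def Duv_def Guv_def mm_def)
  apply (simp add: evs)
  done

lemma gc_30_5: "good 30 5"
  apply (rule good_intro2[where t=13 and xs="[1, 2, 3, 29, 28, 27, 8]"])
  apply (simp_all add: Splus_def Duv_def Guv_def mm_def)
  apply (simp add: evs)
  done

lemma gc_30_6: "good 30 6"
  apply (rule good_intro2[where t=15 and xs="[1, 2, 3, 29, 28, 27, 8, 12, 18]"])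
  apply (simp_all add: Splus_def Duv_def Guv_def mm_def)
  apply (simp add: evs)
  done

lemma gc_31_3: "good 31 3"
  apply (rule good_intro2[where t=8 and xs="[1, 2, 3, 30, 29, 28, 4, 15]"])
  apply (simp_all add: Splus_def Duv_def Guv_def mm_def)
  apply (simp add: evs)
  done

lemma gc_31_4: "good 31 4"
  apply (rule good_intro2[where t=12 and xs="[1, 2, 3, 30, 29, 28, 19]"])
  apply (simp_all add: Splus_def Duv_def Guv_def mm_def)
  apply (simp add: evs)
  done

lemma gc_31_5: "good 31 5"
  apply (rule good_intro2[where t=13 and xs="[1, 2, 3, 30, 29, 28, 8]"])
  apply (simp_all add: Splus_def Duv_def Guv_def mm_def)
  apply (simp add: evs)
  done

lemma gc_31_6: "good 31 6"
  apply (rule good_intro2[where t=14 and xs="[1, 2, 3, 30, 29, 28, 8, 12]"])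
  apply (simp_all add: Splus_def Duv_def Guv_def mm_def)
  apply (simp add: evs)
  done

lemma gc_32_3: "good 32 3"
  apply (rule good_intro2[where t=8 and xs="[1, 2, 3, 31, 30, 29, 4, 20]"])
  apply (simp_all add: Splus_def Duv_def Guv_def mm_def)
  apply (simp add: evs)
  done

lemma gc_32_4: "good 32 4"
  apply (rule good_intro2[where t=12 and xs="[1, 2, 3, 31, 30, 29, 4, 8]"])
  apply (simp_all add: Splus_def Duv_def Guv_def mm_def)
  apply (simp add: evs)
  done

lemma gc_32_5: "good 32 5"
  apply (rule good_intro2[where t=13 and xs="[1, 2, 3, 31, 30, 29, 8]"])
  apply (simp_all add: Splus_def Duv_def Guv_def mm_def)
  apply (simp add: evs)
  done

lemma gc_32_6: "good 32 6"
  apply (rule good_intro2[where t=14 and xs="[1, 2, 3, 31, 30, 29, 20]"])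
  apply (simp_all add: Splus_def Duv_def Guv_def mm_def)
  apply (simp add: evs)
  done

lemma gc_33_3: "good 33 3"
  apply (rule good_intro2[where t=8 and xs="[1, 2, 3, 32, 31, 30, 4, 17]"])
  apply (simp_all add: Splus_def Duv_def Guv_def mm_def)
  apply (simp add: evs)
  done

lemma gc_33_4: "good 33 4"
  apply (rule good_intro2[where t=12 and xs="[1, 2, 3, 32, 31, 30, 21]"])
  apply (simp_all add: Splus_def Duv_def Guv_def mm_def)
  apply (simp add: evs)
  done

lemma gc_33_5: "good 33 5"
  apply (rule good_intro2[where t=13 and xs="[1, 2, 3, 32, 31, 30, 8]"])
  apply (simp_all add: Splus_def Duv_def Guv_def mm_def)
  apply (simp add: evs)
  done

lemma gc_33_6: "good 33 6"
  apply (rule good_intro2[where t=14 and xs="[1, 2, 3, 32, 31, 30, 21]"])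
  apply (simp_all add: Splus_def Duv_def Guv_def mm_def)
  apply (simp add: evs)
  done

lemma gc_34_3: "good 34 3"
  apply (rule good_intro2[where t=8 and xs="[1, 2, 3, 33, 32, 31, 4, 18]"])
  apply (simp_all add: Splus_def Duv_def Guv_def mm_def)
  apply (simp add: evs)
  done

lemma gc_34_4: "good 34 4"
  apply (rule good_intro2[where t=12 and xs="[1, 2, 3, 33, 32, 31, 4, 8]"])
  apply (simp_all add: Splus_def Duv_def Guv_def mm_def)
  apply (simp add: evs)
  done

lemma gc_34_5: "good 34 5"
  apply (rule good_intro2[where t=13 and xs="[1, 2, 3, 33, 32, 31, 8]"])
  apply (simp_all add: Splus_def Duv_def Guv_def mm_def)
  apply (simp add: evs)
  done

lemma gc_34_6: "good 34 6"
  apply (rule good_intro2[where t=15 and xs="[1, 2, 3, 33, 32, 31, 22]"])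
  apply (simp_all add: Splus_def Duv_def Guv_def mm_def)
  apply (simp add: evs)
  done

lemma gc_35_3: "good 35 3"
  apply (rule good_intro2[where t=8 and xs="[1, 2, 3, 34, 33, 32, 4, 19]"])
  apply (simp_all add: Splus_def Duv_def Guv_def mm_def)
  apply (simp add: evs)
  done

lemma gc_35_4: "good 35 4"
  apply (rule good_intro2[where t=12 and xs="[1, 2, 3, 34, 33, 32, 4, 8]"])
  apply (simp_all add: Splus_def Duv_def Guv_def mm_def)
  apply (simp add: evs)
  done

lemma gc_35_5: "good 35 5"
  apply (rule good_intro2[where t=13 and xs="[1, 2, 3, 34, 33, 32, 8]"])
  apply (simp_all add: Splus_def Duv_def Guv_def mm_def)
  apply (simp add: evs)
  done

lemma gc_35_6: "good 35 6"
  apply (rule good_intro2[where t=14 and xs="[1, 2, 3, 34, 33, 32, 23]"])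
  apply (simp_all add: Splus_def Duv_def Guv_def mm_def)
  apply (simp add: evs)
  done

lemma gc_36_3: "good 36 3"
  apply (rule good_intro2[where t=8 and xs="[1, 2, 3, 35, 34, 33, 4, 20]"])
  apply (simp_all add: Splus_def Duv_def Guv_def mm_def)
  apply (simp add: evs)
  done

lemma gc_36_4: "good 36 4"
  apply (rule good_intro2[where t=12 and xs="[1, 2, 3, 35, 34, 33, 24]"])
  apply (simp_all add: Splus_def Duv_def Guv_def mm_def)
  apply (simp add: evs)
  done

lemma gc_36_5: "good 36 5"
  apply (rule good_intro2[where t=13 and xs="[1, 2, 3, 35, 34, 33, 8]"])
  apply (simp_all add: Splus_def Duv_def Guv_def mm_def)
  apply (simp add: evs)
  done

lemma gc_36_6: "good 36 6"
  apply (rule good_intro2[where t=15 and xs="[1, 2, 3, 35, 34, 33, 24]"])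
  apply (simp_all add: Splus_def Duv_def Guv_def mm_def)
  apply (simp add: evs)
  done

lemma gc_36_7: "good 36 7"
  apply (rule good_intro2[where t=18 and xs="[1, 2, 3, 35, 34, 33, 12]"])
  apply (simp_all add: Splus_def Duv_def Guv_def mm_def)
  apply (simp add: evs)
  done

lemma gc_37_3: "good 37 3"
  apply (rule good_intro2[where t=8 and xs="[1, 2, 3, 36, 35, 34, 4, 21]"])
  apply (simp_all add: Splus_def Duv_def Guv_def mm_def)
  apply (simp add: evs)
  done

lemma gc_37_4: "good 37 4"
  apply (rule good_intro2[where t=12 and xs="[1, 2, 3, 36, 35, 34, 4, 8]"])
  apply (simp_all add: Splus_def Duv_def Guv_def mm_def)
  apply (simp add: evs)
  done

lemma gc_37_5: "good 37 5"
  apply (rule good_intro2[where t=13 and xs="[1, 2, 3, 36, 35, 34, 8]"])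
  apply (simp_all add: Splus_def Duv_def Guv_def mm_def)
  apply (simp add: evs)
  done

lemma gc_37_6: "good 37 6"
  apply (rule good_intro2[where t=17 and xs="[1, 2, 3, 36, 35, 34, 8]"])
  apply (simp_all add: Splus_def Duv_def Guv_def mm_def)
  apply (simp add: evs)
  done

lemma gc_37_7: "good 37 7"
  apply (rule good_intro2[where t=18 and xs="[1, 2, 3, 36, 35, 34, 12]"])
  apply (simp_all add: Splus_def Duv_def Guv_def mm_def)
  apply (simp add: evs)
  done

lemma gc_38_3: "good 38 3"
  apply (rule good_intro2[where t=8 and xs="[1, 2, 3, 37, 36, 35, 4, 18]"])
  apply (simp_all add: Splus_def Duv_def Guv_def mm_def)
  apply (simp add: evs)
  done

lemma gc_38_4: "good 38 4"
  apply (rule good_intro2[where t=12 and xs="[1, 2, 3, 37, 36, 35, 22]"])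
  apply (simp_all add: Splus_def Duv_def Guv_def mm_def)
  apply (simp add: evs)
  done

lemma gc_38_5: "good 38 5"
  apply (rule good_intro2[where t=13 and xs="[1, 2, 3, 37, 36, 35, 8]"])
  apply (simp_all add: Splus_def Duv_def Guv_def mm_def)
  apply (simp add: evs)
  done

lemma gc_38_6: "good 38 6"
  apply (rule good_intro2[where t=14 and xs="[1, 2, 3, 37, 36, 35, 26]"])
  apply (simp_all add: Splus_def Duv_def Guv_def mm_def)
  apply (simp add: evs)
  done

lemma gc_38_7: "good 38 7"
  apply (rule good_intro2[where t=19 and xs="[1, 2, 3, 37, 36, 35, 12]"])
  apply (simp_all add: Splus_def Duv_def Guv_def mm_def)
  apply (simp add: evs)
  done

lemma gc_39_3: "good 39 3"
  apply (rule good_intro2[where t=8 and xs="[1, 2, 3, 38, 37, 36, 4, 19]"])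
  apply (simp_all add: Splus_def Duv_def Guv_def mm_def)
  apply (simp add: evs)
  done

lemma gc_39_4: "good 39 4"
  apply (rule good_intro2[where t=12 and xs="[1, 2, 3, 38, 37, 36, 23]"])
  apply (simp_all add: Splus_def Duv_def Guv_def mm_def)
  apply (simp add: evs)
  done

lemma gc_39_5: "good 39 5"
  apply (rule good_intro2[where t=13 and xs="[1, 2, 3, 38, 37, 36, 8]"])
  apply (simp_all add: Splus_def Duv_def Guv_def mm_def)
  apply (simp add: evs)
  done

lemma gc_39_6: "good 39 6"
  apply (rule good_intro2[where t=15 and xs="[1, 2, 3, 38, 37, 36, 27]"])
  apply (simp_all add: Splus_def Duv_def Guv_def mm_def)
  apply (simp add: evs)
  done

lemma gc_39_7: "good 39 7"
  apply (rule good_intro2[where t=18 and xs="[1, 2, 3, 38, 37, 36, 12]"])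
  apply (simp_all add: Splus_def Duv_def Guv_def mm_def)
  apply (simp add: evs)
  done

lemma gc_40_3: "good 40 3"
  apply (rule good_intro2[where t=8 and xs="[1, 2, 3, 39, 38, 37, 4, 24]"])
  apply (simp_all add: Splus_def Duv_def Guv_def mm_def)
  apply (simp add: evs)
  done

lemma gc_40_4: "good 40 4"
  apply (rule good_intro2[where t=12 and xs="[1, 2, 3, 39, 38, 37, 4, 8]"])
  apply (simp_all add: Splus_def Duv_def Guv_def mm_def)
  apply (simp add: evs)
  done

lemma gc_40_5: "good 40 5"
  apply (rule good_intro2[where t=13 and xs="[1, 2, 3, 39, 38, 37, 8]"])
  apply (simp_all add: Splus_def Duv_def Guv_def mm_def)
  apply (simp add: evs)
  done

lemma gc_40_6: "good 40 6"
  apply (rule good_intro2[where t=14 and xs="[1, 2, 3, 39, 38, 37, 24]"])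
  apply (simp_all add: Splus_def Duv_def Guv_def mm_def)
  apply (simp add: evs)
  done

lemma gc_40_7: "good 40 7"
  apply (rule good_intro2[where t=18 and xs="[1, 2, 3, 39, 38, 37, 12]"])
  apply (simp_all add: Splus_def Duv_def Guv_def mm_def)
  apply (simp add: evs)
  done

lemma gc_41_3: "good 41 3"
  apply (rule good_intro2[where t=8 and xs="[1, 2, 3, 40, 39, 38, 4, 21]"])
  apply (simp_all add: Splus_def Duv_def Guv_def mm_def)
  apply (simp add: evs)
  done

lemma gc_41_4: "good 41 4"
  apply (rule good_intro2[where t=12 and xs="[1, 2, 3, 40, 39, 38, 25]"])
  apply (simp_all add: Splus_def Duv_def Guv_def mm_def)
  apply (simp add: evs)
  done

lemma gc_41_5: "good 41 5"
  apply (rule good_intro2[where t=13 and xs="[1, 2, 3, 40, 39, 38, 8]"])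
  apply (simp_all add: Splus_def Duv_def Guv_def mm_def)
  apply (simp add: evs)
  done

lemma gc_41_6: "good 41 6"
  apply (rule good_intro2[where t=14 and xs="[1, 2, 3, 40, 39, 38, 25]"])
  apply (simp_all add: Splus_def Duv_def Guv_def mm_def)
  apply (simp add: evs)
  done

lemma gc_41_7: "good 41 7"
  apply (rule good_intro2[where t=18 and xs="[1, 2, 3, 40, 39, 38, 12]"])
  apply (simp_all add: Splus_def Duv_def Guv_def mm_def)
  apply (simp add: evs)
  done

lemma gc_42_3: "good 42 3"
  apply (rule good_intro2[where t=8 and xs="[1, 2, 3, 41, 40, 39, 4, 22]"])
  apply (simp_all add: Splus_def Duv_def Guv_def mm_def)
  apply (simp add: evs)
  done

lemma gc_42_4: "good 42 4"
  apply (rule good_intro2[where t=12 and xs="[1, 2, 3, 41, 40, 39, 4, 8]"])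
  apply (simp_all add: Splus_def Duv_def Guv_def mm_def)
  apply (simp add: evs)
  done

lemma gc_42_5: "good 42 5"
  apply (rule good_intro2[where t=13 and xs="[1, 2, 3, 41, 40, 39, 8]"])
  apply (simp_all add: Splus_def Duv_def Guv_def mm_def)
  apply (simp add: evs)
  done

lemma gc_42_6: "good 42 6"
  apply (rule good_intro2[where t=15 and xs="[1, 2, 3, 41, 40, 39, 26]"])
  apply (simp_all add: Splus_def Duv_def Guv_def mm_def)
  apply (simp add: evs)
  done

lemma gc_42_7: "good 42 7"
  apply (rule good_intro2[where t=18 and xs="[1, 2, 3, 41, 40, 39, 12]"])
  apply (simp_all add: Splus_def Duv_def Guv_def mm_def)
  apply (simp add: evs)
  done

lemma gc_43_3: "good 43 3"
  apply (rule good_intro2[where t=8 and xs="[1, 2, 3, 42, 41, 40, 4, 23]"])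
  apply (simp_all add: Splus_def Duv_def Guv_def mm_def)
  apply (simp add: evs)
  done

lemma gc_43_4: "good 43 4"
  apply (rule good_intro2[where t=12 and xs="[1, 2, 3, 42, 41, 40, 4, 8]"])
  apply (simp_all add: Splus_def Duv_def Guv_def mm_def)
  apply (simp add: evs)
  done

lemma gc_43_5: "good 43 5"
  apply (rule good_intro2[where t=13 and xs="[1, 2, 3, 42, 41, 40, 8]"])
  apply (simp_all add: Splus_def Duv_def Guv_def mm_def)
  apply (simp add: evs)
  done

lemma gc_43_6: "good 43 6"
  apply (rule good_intro2[where t=14 and xs="[1, 2, 3, 42, 41, 40, 27]"])
  apply (simp_all add: Splus_def Duv_def Guv_def mm_def)
  apply (simp add: evs)
  done

lemma gc_43_7: "good 43 7"
  apply (rule good_intro2[where t=18 and xs="[1, 2, 3, 42, 41, 40, 12]"])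
  apply (simp_all add: Splus_def Duv_def Guv_def mm_def)
  apply (simp add: evs)
  done

lemma gc_44_3: "good 44 3"
  apply (rule good_intro2[where t=8 and xs="[1, 2, 3, 43, 42, 41, 4, 24]"])
  apply (simp_all add: Splus_def Duv_def Guv_def mm_def)
  apply (simp add: evs)
  done

lemma gc_44_4: "good 44 4"
  apply (rule good_intro2[where t=12 and xs="[1, 2, 3, 43, 42, 41, 28]"])
  apply (simp_all add: Splus_def Duv_def Guv_def mm_def)
  apply (simp add: evs)
  done

lemma gc_44_5: "good 44 5"
  apply (rule good_intro2[where t=13 and xs="[1, 2, 3, 43, 42, 41, 8]"])
  apply (simp_all add: Splus_def Duv_def Guv_def mm_def)
  apply (simp add: evs)
  done

lemma gc_44_6: "good 44 6"
  apply (rule good_intro2[where t=15 and xs="[1, 2, 3, 43, 42, 41, 28]"])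
  apply (simp_all add: Splus_def Duv_def Guv_def mm_def)
  apply (simp add: evs)
  done

lemma gc_44_7: "good 44 7"
  apply (rule good_intro2[where t=18 and xs="[1, 2, 3, 43, 42, 41, 12]"])
  apply (simp_all add: Splus_def Duv_def Guv_def mm_def)
  apply (simp add: evs)
  done

lemma gc_45_3: "good 45 3"
  apply (rule good_intro2[where t=8 and xs="[1, 2, 3, 44, 43, 42, 4, 25]"])
  apply (simp_all add: Splus_def Duv_def Guv_def mm_def)
  apply (simp add: evs)
  done

lemma gc_45_4: "good 45 4"
  apply (rule good_intro2[where t=12 and xs="[1, 2, 3, 44, 43, 42, 4, 8]"])
  apply (simp_all add: Splus_def Duv_def Guv_def mm_def)
  apply (simp add: evs)
  done

lemma gc_45_5: "good 45 5"
  apply (rule good_intro2[where t=13 and xs="[1, 2, 3, 44, 43, 42, 8]"])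
  apply (simp_all add: Splus_def Duv_def Guv_def mm_def)
  apply (simp add: evs)
  done

lemma gc_45_6: "good 45 6"
  apply (rule good_intro2[where t=17 and xs="[1, 2, 3, 44, 43, 42, 8]"])
  apply (simp_all add: Splus_def Duv_def Guv_def mm_def)
  apply (simp add: evs)
  done

lemma gc_45_7: "good 45 7"
  apply (rule good_intro2[where t=18 and xs="[1, 2, 3, 44, 43, 42, 12]"])
  apply (simp_all add: Splus_def Duv_def Guv_def mm_def)
  apply (simp add: evs)
  done

lemma gc_46_3: "good 46 3"
  apply (rule good_intro2[where t=8 and xs="[1, 2, 3, 45, 44, 43, 4, 22]"])
  apply (simp_all add: Splus_def Duv_def Guv_def mm_def)
  apply (simp add: evs)
  done

lemma gc_46_4: "good 46 4"
  apply (rule good_intro2[where t=12 and xs="[1, 2, 3, 45, 44, 43, 26]"])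
  apply (simp_all add: Splus_def Duv_def Guv_def mm_def)
  apply (simp add: evs)
  done

lemma gc_46_5: "good 46 5"
  apply (rule good_intro2[where t=13 and xs="[1, 2, 3, 45, 44, 43, 8]"])
  apply (simp_all add: Splus_def Duv_def Guv_def mm_def)
  apply (simp add: evs)
  done

lemma gc_46_6: "good 46 6"
  apply (rule good_intro2[where t=14 and xs="[1, 2, 3, 45, 44, 43, 30]"])
  apply (simp_all add: Splus_def Duv_def Guv_def mm_def)
  apply (simp add: evs)
  done

lemma gc_46_7: "good 46 7"
  apply (rule good_intro2[where t=18 and xs="[1, 2, 3, 45, 44, 43, 12]"])
  apply (simp_all add: Splus_def Duv_def Guv_def mm_def)
  apply (simp add: evs)
  done

lemma gc_47_3: "good 47 3"
  apply (rule good_intro2[where t=8 and xs="[1, 2, 3, 46, 45, 44, 4, 23]"])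
  apply (simp_all add: Splus_def Duv_def Guv_def mm_def)
  apply (simp add: evs)
  done

lemma gc_47_4: "good 47 4"
  apply (rule good_intro2[where t=12 and xs="[1, 2, 3, 46, 45, 44, 27]"])
  apply (simp_all add: Splus_def Duv_def Guv_def mm_def)
  apply (simp add: evs)
  done

lemma gc_47_5: "good 47 5"
  apply (rule good_intro2[where t=13 and xs="[1, 2, 3, 46, 45, 44, 8]"])
  apply (simp_all add: Splus_def Duv_def Guv_def mm_def)
  apply (simp add: evs)
  done

lemma gc_47_6: "good 47 6"
  apply (rule good_intro2[where t=15 and xs="[1, 2, 3, 46, 45, 44, 31]"])
  apply (simp_all add: Splus_def Duv_def Guv_def mm_def)
  apply (simp add: evs)
  done

lemma gc_47_7: "good 47 7"
  apply (rule good_intro2[where t=18 and xs="[1, 2, 3, 46, 45, 44, 12]"])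
  apply (simp_all add: Splus_def Duv_def Guv_def mm_def)
  apply (simp add: evs)
  done

lemma gc_48_3: "good 48 3"
  apply (rule good_intro2[where t=8 and xs="[1, 2, 3, 47, 46, 45, 4, 28]"])
  apply (simp_all add: Splus_def Duv_def Guv_def mm_def)
  apply (simp add: evs)
  done

lemma gc_48_4: "good 48 4"
  apply (rule good_intro2[where t=12 and xs="[1, 2, 3, 47, 46, 45, 4, 8]"])
  apply (simp_all add: Splus_def Duv_def Guv_def mm_def)
  apply (simp add: evs)
  done

lemma gc_48_5: "good 48 5"
  apply (rule good_intro2[where t=13 and xs="[1, 2, 3, 47, 46, 45, 8]"])
  apply (simp_all add: Splus_def Duv_def Guv_def mm_def)
  apply (simp add: evs)
  done

lemma gc_48_6: "good 48 6"
  apply (rule good_intro2[where t=14 and xs="[1, 2, 3, 47, 46, 45, 28]"])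
  apply (simp_all add: Splus_def Duv_def Guv_def mm_def)
  apply (simp add: evs)
  done

lemma gc_48_7: "good 48 7"
  apply (rule good_intro2[where t=18 and xs="[1, 2, 3, 47, 46, 45, 12]"])
  apply (simp_all add: Splus_def Duv_def Guv_def mm_def)
  apply (simp add: evs)
  done

lemma gc_49_3: "good 49 3"
  apply (rule good_intro2[where t=8 and xs="[1, 2, 3, 48, 47, 46, 4, 25]"])
  apply (simp_all add: Splus_def Duv_def Guv_def mm_def)
  apply (simp add: evs)
  done

lemma gc_49_4: "good 49 4"
  apply (rule good_intro2[where t=12 and xs="[1, 2, 3, 48, 47, 46, 29]"])
  apply (simp_all add: Splus_def Duv_def Guv_def mm_def)
  apply (simp add: evs)
  done

lemma gc_49_5: "good 49 5"
  apply (rule good_intro2[where t=13 and xs="[1, 2, 3, 48, 47, 46, 8]"])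
  apply (simp_all add: Splus_def Duv_def Guv_def mm_def)
  apply (simp add: evs)
  done

lemma gc_49_6: "good 49 6"
  apply (rule good_intro2[where t=14 and xs="[1, 2, 3, 48, 47, 46, 29]"])
  apply (simp_all add: Splus_def Duv_def Guv_def mm_def)
  apply (simp add: evs)
  done

lemma gc_49_7: "good 49 7"
  apply (rule good_intro2[where t=18 and xs="[1, 2, 3, 48, 47, 46, 12]"])
  apply (simp_all add: Splus_def Duv_def Guv_def mm_def)
  apply (simp add: evs)
  done

lemma gcn_25: assumes "3 \<le> l" "l \<le> 5" shows "good 25 l"
proof -
  have "l = 3 \<or> l = 4 \<or> l = 5" using assms by presburger
  then show ?thesis using gc_25_3 gc_25_4 gc_25_5 by blast
qed

lemma gcn_26: assumes "3 \<le> l" "l \<le> 5" shows "good 26 l"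
proof -
  have "l = 3 \<or> l = 4 \<or> l = 5" using assms by presburger
  then show ?thesis using gc_26_3 gc_26_4 gc_26_5 by blast
qed

lemma gcn_27: assumes "3 \<le> l" "l \<le> 5" shows "good 27 l"
proof -
  have "l = 3 \<or> l = 4 \<or> l = 5" using assms by presburger
  then show ?thesis using gc_27_3 gc_27_4 gc_27_5 by blast
qed

lemma gcn_28: assumes "3 \<le> l" "l \<le> 6" shows "good 28 l"
proof -
  have "l = 3 \<or> l = 4 \<or> l = 5 \<or> l = 6" using assms by presburger
  then show ?thesis using gc_28_3 gc_28_4 gc_28_5 gc_28_6 by blast
qed

lemma gcn_29: assumes "3 \<le> l" "l \<le> 6" shows "good 29 l"
proof -
  have "l = 3 \<or> l = 4 \<or> l = 5 \<or> l = 6" using assms by presburger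
  then show ?thesis using gc_29_3 gc_29_4 gc_29_5 gc_29_6 by blast
qed

lemma gcn_30: assumes "3 \<le> l" "l \<le> 6" shows "good 30 l"
proof -
  have "l = 3 \<or> l = 4 \<or> l = 5 \<or> l = 6" using assms by presburger
  then show ?thesis using gc_30_3 gc_30_4 gc_30_5 gc_30_6 by blast
qed

lemma gcn_31: assumes "3 \<le> l" "l \<le> 6" shows "good 31 l"
proof -
  have "l = 3 \<or> l = 4 \<or> l = 5 \<or> l = 6" using assms by presburger
  then show ?thesis using gc_31_3 gc_31_4 gc_31_5 gc_31_6 by blast
qed

lemma gcn_32: assumes "3 \<le> l" "l \<le> 6" shows "good 32 l"
proof -
  have "l = 3 \<or> l = 4 \<or> l = 5 \<or> l = 6" using assms by presburger
  then show ?thesis using gc_32_3 gc_32_4 gc_32_5 gc_32_6 by blast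
qed

lemma gcn_33: assumes "3 \<le> l" "l \<le> 6" shows "good 33 l"
proof -
  have "l = 3 \<or> l = 4 \<or> l = 5 \<or> l = 6" using assms by presburger
  then show ?thesis using gc_33_3 gc_33_4 gc_33_5 gc_33_6 by blast
qed

lemma gcn_34: assumes "3 \<le> l" "l \<le> 6" shows "good 34 l"
proof -
  have "l = 3 \<or> l = 4 \<or> l = 5 \<or> l = 6" using assms by presburger
  then show ?thesis using gc_34_3 gc_34_4 gc_34_5 gc_34_6 by blast
qed

lemma gcn_35: assumes "3 \<le> l" "l \<le> 6" shows "good 35 l"
proof -
  have "l = 3 \<or> l = 4 \<or> l = 5 \<or> l = 6" using assms by presburger
  then show ?thesis using gc_35_3 gc_35_4 gc_35_5 gc_35_6 by blast
qed

lemma gcn_36: assumes "3 \<le> l" "l \<le> 7" shows "good 36 l"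
proof -
  have "l = 3 \<or> l = 4 \<or> l = 5 \<or> l = 6 \<or> l = 7" using assms by presburger
  then show ?thesis using gc_36_3 gc_36_4 gc_36_5 gc_36_6 gc_36_7 by blast
qed

lemma gcn_37: assumes "3 \<le> l" "l \<le> 7" shows "good 37 l"
proof -
  have "l = 3 \<or> l = 4 \<or> l = 5 \<or> l = 6 \<or> l = 7" using assms by presburger
  then show ?thesis using gc_37_3 gc_37_4 gc_37_5 gc_37_6 gc_37_7 by blast
qed

lemma gcn_38: assumes "3 \<le> l" "l \<le> 7" shows "good 38 l"
proof -
  have "l = 3 \<or> l = 4 \<or> l = 5 \<or> l = 6 \<or> l = 7" using assms by presburger
  then show ?thesis using gc_38_3 gc_38_4 gc_38_5 gc_38_6 gc_38_7 by blast
qed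

lemma gcn_39: assumes "3 \<le> l" "l \<le> 7" shows "good 39 l"
proof -
  have "l = 3 \<or> l = 4 \<or> l = 5 \<or> l = 6 \<or> l = 7" using assms by presburger
  then show ?thesis using gc_39_3 gc_39_4 gc_39_5 gc_39_6 gc_39_7 by blast
qed

lemma gcn_40: assumes "3 \<le> l" "l \<le> 7" shows "good 40 l"
proof -
  have "l = 3 \<or> l = 4 \<or> l = 5 \<or> l = 6 \<or> l = 7" using assms by presburger
  then show ?thesis using gc_40_3 gc_40_4 gc_40_5 gc_40_6 gc_40_7 by blast
qed

lemma gcn_41: assumes "3 \<le> l" "l \<le> 7" shows "good 41 l"
proof -
  have "l = 3 \<or> l = 4 \<or> l = 5 \<or> l = 6 \<or> l = 7" using assms by presburger
  then show ?thesis using gc_41_3 gc_41_4 gc_41_5 gc_41_6 gc_41_7 by blast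
qed

lemma gcn_42: assumes "3 \<le> l" "l \<le> 7" shows "good 42 l"
proof -
  have "l = 3 \<or> l = 4 \<or> l = 5 \<or> l = 6 \<or> l = 7" using assms by presburger
  then show ?thesis using gc_42_3 gc_42_4 gc_42_5 gc_42_6 gc_42_7 by blast
qed

lemma gcn_43: assumes "3 \<le> l" "l \<le> 7" shows "good 43 l"
proof -
  have "l = 3 \<or> l = 4 \<or> l = 5 \<or> l = 6 \<or> l = 7" using assms by presburger
  then show ?thesis using gc_43_3 gc_43_4 gc_43_5 gc_43_6 gc_43_7 by blast
qed

lemma gcn_44: assumes "3 \<le> l" "l \<le> 7" shows "good 44 l"
proof -
  have "l = 3 \<or> l = 4 \<or> l = 5 \<or> l = 6 \<or> l = 7" using assms by presburger
  then show ?thesis using gc_44_3 gc_44_4 gc_44_5 gc_44_6 gc_44_7 by blast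
qed

lemma gcn_45: assumes "3 \<le> l" "l \<le> 7" shows "good 45 l"
proof -
  have "l = 3 \<or> l = 4 \<or> l = 5 \<or> l = 6 \<or> l = 7" using assms by presburger
  then show ?thesis using gc_45_3 gc_45_4 gc_45_5 gc_45_6 gc_45_7 by blast
qed

lemma gcn_46: assumes "3 \<le> l" "l \<le> 7" shows "good 46 l"
proof -
  have "l = 3 \<or> l = 4 \<or> l = 5 \<or> l = 6 \<or> l = 7" using assms by presburger
  then show ?thesis using gc_46_3 gc_46_4 gc_46_5 gc_46_6 gc_46_7 by blast
qed

lemma gcn_47: assumes "3 \<le> l" "l \<le> 7" shows "good 47 l"
proof -
  have "l = 3 \<or> l = 4 \<or> l = 5 \<or> l = 6 \<or> l = 7" using assms by presburger
  then show ?thesis using gc_47_3 gc_47_4 gc_47_5 gc_47_6 gc_47_7 by blast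
qed

lemma gcn_48: assumes "3 \<le> l" "l \<le> 7" shows "good 48 l"
proof -
  have "l = 3 \<or> l = 4 \<or> l = 5 \<or> l = 6 \<or> l = 7" using assms by presburger
  then show ?thesis using gc_48_3 gc_48_4 gc_48_5 gc_48_6 gc_48_7 by blast
qed

lemma gcn_49: assumes "3 \<le> l" "l \<le> 7" shows "good 49 l"
proof -
  have "l = 3 \<or> l = 4 \<or> l = 5 \<or> l = 6 \<or> l = 7" using assms by presburger
  then show ?thesis using gc_49_3 gc_49_4 gc_49_5 gc_49_6 gc_49_7 by blast
qed

lemma good_conc: assumes "24 < n" "n < 50" "3 \<le> l" "l \<le> 7" "l \<le> (n + 4) div 8 + 2" shows "good n l"
proof -
  have "n = 25 \<or> n = 26 \<or> n = 27 \<or> n = 28 \<or> n = 29 \<or> n = 30 \<or> n = 31 \<or> n = 32 \<or> n = 33 \<or> n = 34 \<or> n = 35 \<or> n = 36 \<or> n = 37 \<or> n = 38 \<or> n = 39 \<or> n = 40 \<or> n = 41 \<or> n = 42 \<or> n = 43 \<or> n = 44 \<or> n = 45 \<or> n = 46 \<or> n = 47 \<or> n = 48 \<or> n = 49" using assms by presburger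
  then show ?thesis using assms gcn_25 gcn_26 gcn_27 gcn_28 gcn_29 gcn_30 gcn_31 gcn_32 gcn_33 gcn_34 gcn_35 gcn_36 gcn_37 gcn_38 gcn_39 gcn_40 gcn_41 gcn_42 gcn_43 gcn_44 gcn_45 gcn_46 gcn_47 gcn_48 gcn_49 by (elim disjE) simp_all
qed

theorem proposition3p3:
  fixes n l :: nat
  assumes "n > 24" and "3 \<le> l" and "l < gdiam (gp_verts n) (gp_adj n 4)"
  shows "\<not> l_distance_balanced (gp_verts n) (gp_adj n 4) l"
proof -
  have n: "24 < n" using assms(1) by simp
  have lK: "l \<le> (n + 4) div 8 + 2" using diam_le[OF n] assms(3) by linarith
  have "good n l"
  proof (cases "8 \<le> l")
    case True
    show ?thesis by (rule good_big[OF n True lK])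
  next
    case False
    then have l7: "l \<le> 7" by simp
    show ?thesis
    proof (cases "50 \<le> n")
      case True
      have "l = 3 \<or> l = 4 \<or> l = 5 \<or> l = 6 \<or> l = 7" using l7 assms(2) by presburger
      then show ?thesis using good_3[OF True] good_4[OF True] good_5[OF True] good_6[OF True] good_7[OF True]
        by (elim disjE) simp_all
    next
      case False
      then show ?thesis using good_conc[OF n _ assms(2) l7 lK] by simp
    qed
  qed
  then show ?thesis by (rule good_imp[OF n])
qed

end
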